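(* Let $\mathbf A$ be an algebra with a Mal'cev term, let $n\ge1$, let $q_n$ be a strong $n$-cube term of $\mathbf A$, and let $\alpha_0,\dots,\alpha_{n-1}$ be congruences of $\mathbf A$. Then a tuple $\mathbf a\in A^{2^n}$ belongs to $\Delta(\alpha_0,\dots,\alpha_{n-1})$ if and only if both (a) for every $j<n$, $(a_k\mid k<2^n,\ k_{(j)}=0)\in\Delta(\alpha_i\mid i<n,\ i\neq j)$, and (b) $q_n(a_0,\dots,a_{2^n-2})\equiv a_{2^n-1}\pmod{[\alpha_0,\dots,\alpha_{n-1}]}$.
   Context: A Mal'cev term is a ternary term $q$ with $q(x,x,y)\approx y\approx q(y,x,x)$. For $k\ge0$, $k_{(i)}$ denotes the $i$-th binary digit of $k$ (least significant is $i=0$). For $i<n$ let $\rho_i(k)$ be $k$ with its $i$-th binary digit set to $0$. A strong $n$-cube term is a $(2^n-1)$-ary term $q_n$ such that for each $i<n$ the identity $q_n(y_{\rho_i(0)},\dots,y_{\rho_i(2^n-2)})\approx y_{\rho_i(2^n-1)}$ holds. Tuples in $A^m$ are indexed by $0,\dots,m-1$; $(a_k\mid\phi(k))$ denotes the tuple of the $a_k$ with $\phi(k)$ in increasing order of $k$. For $a,b\in A$ and $i<n$, $\mathbf c_i^n(a,b)\in A^{2^n}$ has $k$-th coordinate $a$ if $k_{(i)}=0$ and $b$ if $k_{(i)}=1$. $\Delta(\alpha_0,\dots,\alpha_{n-1})$ is the subuniverse of $\mathbf A^{2^n}$ generated by $\{\mathbf c_i^n(a,b): i<n,\ (a,b)\in\alpha_i\}$,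 and $\Delta()=A$; $\Delta(\alpha_i\mid i\in I)$ means $\Delta$ of the $\alpha_i$, $i\in I$, listed in increasing order of $i$. Higher commutator (Bulatov): for congruences $\alpha_0,\dots,\alpha_{n-1},\gamma$, say $\alpha_0,\dots,\alpha_{n-2}$ centralize $\alpha_{n-1}$ modulo $\gamma$ if for all tuples $\mathbf a_i,\mathbf b_i$ ($i<n$, with $\mathbf a_i\neq\mathbf b_i$ congruent modulo $\alpha_i$ coordinatewise) and every term operation $t$ such that $t(\mathbf x_0,\dots,\mathbf x_{n-2},\mathbf a_{n-1})\equiv_\gamma t(\mathbf x_0,\dots,\mathbf x_{n-2},\mathbf b_{n-1})$ for all $(\mathbf x_0,\dots,\mathbf x_{n-2})\in(\{\mathbf a_0,\mathbf b_0\}\times\dots\times\{\mathbf a_{n-2},\mathbf b_{n-2}\})\setminus\{(\mathbf b_0,\dots,\mathbf b_{n-2})\}$, we have $t(\mathbf b_0,\dots,\mathbf b_{n-2},\mathbf a_{n-1})\equiv_\gamma t(\mathbf b_0,\dots,\mathbf b_{n-2},\mathbf b_{n-1})$. $[\alpha_0,\dots,\alpha_{n-1}]$ is the smallest such $\gamma$. *)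

theory Defs
  imports Main
begin

text \<open>An algebra is given by a carrier A and a set F of basic operations,
  each an operation paired with its arity; an operation of arity k is
  applied to lists of length k.\<close>

type_synonym 'a operation = "nat \<times> ('a list \<Rightarrow> 'a)"

definition algebra :: "'a set \<Rightarrow> 'a operation set \<Rightarrow> bool" where
  "algebra A F \<longleftrightarrow> (\<forall>(k, f) \<in> F. \<forall>xs. length xs = k \<and> set xs \<subseteq> A \<longrightarrow> f xs \<in> A)"

inductive_set term_ops :: "'a operation set \<Rightarrow> nat \<Rightarrow> ('a list \<Rightarrow> 'a) set"
  for F :: "'a operation set" and n :: nat where
  proj: "i < n \<Longrightarrow> (\<lambda>xs. xs ! i) \<in> term_ops F n"
| comp: "(k, f) \<in> F \<Longrightarrow> length gs = k \<Longrightarrow> \<forall>g\<in>set gs. g \<in> term_ops F n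
          \<Longrightarrow> (\<lambda>xs. f (map (\<lambda>g. g xs) gs)) \<in> term_ops F n"

definition has_malcev :: "'a set \<Rightarrow> 'a operation set \<Rightarrow> bool" where
  "has_malcev A F \<longleftrightarrow> (\<exists>q \<in> term_ops F 3. \<forall>x\<in>A. \<forall>y\<in>A. q [x, x, y] = y \<and> q [y, x, x] = y)"

text \<open>k with its i-th binary digit set to 0: unset_bit i k; the i-th digit: bit k i.\<close>
definition strong_cube_term :: "'a set \<Rightarrow> 'a operation set \<Rightarrow> nat \<Rightarrow> ('a list \<Rightarrow> 'a) \<Rightarrow> bool" where
  "strong_cube_term A F n q \<longleftrightarrow> q \<in> term_ops F (2^n - 1) \<and>
     (\<forall>i<n. \<forall>y :: nat \<Rightarrow> 'a. (\<forall>k. y k \<in> A) \<longrightarrow>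
        q (map (\<lambda>k. y (unset_bit i k)) [0..<2^n - 1]) = y (unset_bit i (2^n - 1)))"

definition congruence :: "'a set \<Rightarrow> 'a operation set \<Rightarrow> ('a \<times> 'a) set \<Rightarrow> bool" where
  "congruence A F \<theta> \<longleftrightarrow> \<theta> \<subseteq> A \<times> A \<and> equiv A \<theta> \<and>
     (\<forall>(k, f) \<in> F. \<forall>xs ys. length xs = k \<and> length ys = k \<and> list_all2 (\<lambda>x y. (x, y) \<in> \<theta>) xs ys
        \<longrightarrow> (f xs, f ys) \<in> \<theta>)"

text \<open>Subuniverse of A^m (tuples = lists of length m) generated by G.\<close>
inductive_set sub_gen :: "'a operation set \<Rightarrow> nat \<Rightarrow> 'a list set \<Rightarrow> 'a list set"
  for F :: "'a operation set" and m :: nat and G :: "'a list set" where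
  gen: "x \<in> G \<Longrightarrow> x \<in> sub_gen F m G"
| app: "(k, f) \<in> F \<Longrightarrow> length xs = k \<Longrightarrow> \<forall>x\<in>set xs. x \<in> sub_gen F m G
          \<Longrightarrow> map (\<lambda>j. f (map (\<lambda>x. x ! j) xs)) [0..<m] \<in> sub_gen F m G"

definition cube_vec :: "nat \<Rightarrow> nat \<Rightarrow> 'a \<Rightarrow> 'a \<Rightarrow> 'a list" where
  "cube_vec n i a b = map (\<lambda>k. if bit k i then b else a) [0..<2^n]"

definition Delta :: "'a set \<Rightarrow> 'a operation set \<Rightarrow> ('a \<times> 'a) set list \<Rightarrow> 'a list set" where
  "Delta A F \<alpha>s = (if \<alpha>s = [] then {[x] | x. x \<in> A}
     else sub_gen F (2 ^ length \<alpha>s)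
       {cube_vec (length \<alpha>s) i a b | i a b. i < length \<alpha>s \<and> (a, b) \<in> \<alpha>s ! i})"

text \<open>Bulatov centrality: \<alpha>s = [\<alpha>_0,...,\<alpha>_{n-1}]; alpha_0..alpha_{n-2} centralize
  alpha_{n-1} modulo \<gamma>. Tuples a_i, b_i are lists of length m_i; the term t has arity
  m_0 + ... + m_{n-1}; the choice vector s selects b_i (s i) or a_i (\<not> s i).\<close>
definition centralizes :: "'a set \<Rightarrow> 'a operation set \<Rightarrow> ('a \<times> 'a) set list \<Rightarrow> ('a \<times> 'a) set \<Rightarrow> bool" where
  "centralizes A F \<alpha>s \<gamma> \<longleftrightarrow> (let n = length \<alpha>s in
     \<forall>as bs :: nat \<Rightarrow> 'a list. \<forall>t.
       (\<forall>i<n. length (as i) = length (bs i) \<and> set (as i) \<subseteq> A \<and> set (bs i) \<subseteq> A \<and>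
              as i \<noteq> bs i \<and> list_all2 (\<lambda>x y. (x, y) \<in> \<alpha>s ! i) (as i) (bs i)) \<longrightarrow>
       t \<in> term_ops F (\<Sum>i<n. length (as i)) \<longrightarrow>
       (\<forall>s :: nat \<Rightarrow> bool. \<not> (\<forall>i<n - 1. s i) \<longrightarrow>
          (t (concat (map (\<lambda>i. if s i then bs i else as i) [0..<n - 1]) @ as (n - 1)),
           t (concat (map (\<lambda>i. if s i then bs i else as i) [0..<n - 1]) @ bs (n - 1))) \<in> \<gamma>) \<longrightarrow>
       (t (concat (map bs [0..<n - 1]) @ as (n - 1)),
        t (concat (map bs [0..<n - 1]) @ bs (n - 1))) \<in> \<gamma>)"

definition commutator :: "'a set \<Rightarrow> 'a operation set \<Rightarrow> ('a \<times> 'a) set list \<Rightarrow> ('a \<times> 'a) set" where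
  "commutator A F \<alpha>s = \<Inter> {\<gamma>. congruence A F \<gamma> \<and> centralizes A F \<alpha>s \<gamma>}"

end

theory Submission
  imports Defs
begin



lemma term_ops_subst:
  assumes "t \<in> term_ops F k" "length gs = k" "\<forall>g\<in>set gs. g \<in> term_ops F m"
  shows "(\<lambda>xs. t (map (\<lambda>g. g xs) gs)) \<in> term_ops F m"
  using assms
proof (induction t rule: term_ops.induct)
  case (proj i)
  have "(\<lambda>xs. map (\<lambda>g. g xs) gs ! i) = gs ! i" using proj by (auto simp: fun_eq_iff)
  then show ?case using proj by auto
next
  case (comp k' f hs)
  let ?hs = "map (\<lambda>h xs. h (map (\<lambda>g. g xs) gs)) hs"
  have "(\<lambda>xs. f (map (\<lambda>g. g xs) ?hs)) \<in> term_ops F m"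
    by (rule term_ops.comp[OF comp(1)]) (use comp in auto)
  then show ?case by (simp add: o_def)
qed

lemma term_ops_proj_list:
  assumes "t \<in> term_ops F k" "\<forall>i<k. h i < m"
  shows "(\<lambda>xs. t (map (\<lambda>i. xs ! h i) [0..<k])) \<in> term_ops F m"
proof -
  have "(\<lambda>xs. t (map (\<lambda>g. g xs) (map (\<lambda>i xs. xs ! h i) [0..<k]))) \<in> term_ops F m"
    by (rule term_ops_subst[OF assms(1)]) (use assms(2) in \<open>auto intro: term_ops.proj\<close>)
  then show ?thesis by (simp add: o_def)
qed


lemma algebraD:
  assumes "algebra A F" "(k, f) \<in> F" "length xs = k" "set xs \<subseteq> A"
  shows "f xs \<in> A"
  using assms unfolding algebra_def by (drule_tac x="(k,f)" in bspec) auto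

lemma congruenceD:
  assumes "congruence A F \<theta>" "(k, f) \<in> F" "length xs = k" "length ys = k"
    "list_all2 (\<lambda>x y. (x, y) \<in> \<theta>) xs ys"
  shows "(f xs, f ys) \<in> \<theta>"
proof -
  have "\<forall>(k, f) \<in> F. \<forall>xs ys. length xs = k \<and> length ys = k \<and> list_all2 (\<lambda>x y. (x, y) \<in> \<theta>) xs ys
        \<longrightarrow> (f xs, f ys) \<in> \<theta>" using assms(1) unfolding congruence_def by (elim conjE)
  then show ?thesis using assms(2-) by (drule_tac x="(k,f)" in bspec) auto
qed


lemma term_ops_in_A:
  assumes "algebra A F" "t \<in> term_ops F k" "length xs = k" "set xs \<subseteq> A"
  shows "t xs \<in> A"
  using assms(2,3)
proof (induction t rule: term_ops.induct)
  case (proj i) then show ?case using assms(4) by auto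
next
  case (comp k' f gs)
  have "length (map (\<lambda>g. g xs) gs) = k'" "set (map (\<lambda>g. g xs) gs) \<subseteq> A" using comp by auto
  then show ?case using algebraD[OF assms(1) comp(1)] by blast
qed

lemma term_ops_cong:
  assumes "congruence A F \<theta>" "t \<in> term_ops F k" "length xs = k" "length ys = k"
    "list_all2 (\<lambda>x y. (x, y) \<in> \<theta>) xs ys"
  shows "(t xs, t ys) \<in> \<theta>"
  using assms(2-)
proof (induction t rule: term_ops.induct)
  case (proj i) then show ?case by (auto simp: list_all2_conv_all_nth)
next
  case (comp k' f gs)
  have "list_all2 (\<lambda>x y. (x, y) \<in> \<theta>) (map (\<lambda>g. g xs) gs) (map (\<lambda>g. g ys) gs)"
    using comp by (auto simp: list_all2_conv_all_nth)
  moreover have "length (map (\<lambda>g. g xs) gs) = k'" "length (map (\<lambda>g. g ys) gs) = k'" using comp by auto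
  ultimately show ?case using congruenceD[OF assms(1) comp(1)] by blast
qed

lemma sub_gen_len_A:
  assumes "algebra A F" "\<forall>g\<in>G. length g = m \<and> set g \<subseteq> A" "x \<in> sub_gen F m G"
  shows "length x = m \<and> set x \<subseteq> A"
  using assms(3)
proof (induction x rule: sub_gen.induct)
  case (gen x) then show ?case using assms(2) by auto
next
  case (app k f xs)
  have "f (map (\<lambda>x. x ! j) xs) \<in> A" if "j < m" for j
  proof -
    have "set (map (\<lambda>x. x ! j) xs) \<subseteq> A"
    proof
      fix y assume "y \<in> set (map (\<lambda>x. x ! j) xs)"
      then obtain x where "x \<in> set xs" "y = x ! j" by auto
      with app(3) that show "y \<in> A" by (metis nth_mem subsetD)
    qed
    moreover have "length (map (\<lambda>x. x ! j) xs) = k" using app by simp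
    ultimately show ?thesis using algebraD[OF assms(1) app(1)] by blast
  qed
  then have "set (map (\<lambda>j. f (map (\<lambda>x. x ! j) xs)) [0..<m]) \<subseteq> A"
    unfolding set_map by (auto simp del: map_map)
  then show ?case by simp
qed

lemma sub_gen_lenD:
  assumes "\<forall>g\<in>G. length g = m" "x \<in> sub_gen F m G"
  shows "length x = m"
  using assms(2) by (induction x rule: sub_gen.induct) (use assms(1) in auto)

lemma sub_gen_term:
  assumes "\<forall>g\<in>G. length g = m" "t \<in> term_ops F k" "length xs = k" "set xs \<subseteq> sub_gen F m G"
  shows "map (\<lambda>p. t (map (\<lambda>x. x ! p) xs)) [0..<m] \<in> sub_gen F m G"
  using assms(2,3)
proof (induction t rule: term_ops.induct)
  case (proj i)
  have "xs ! i \<in> sub_gen F m G" using proj assms(4) by auto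
  moreover have "length (xs ! i) = m" using sub_gen_lenD[OF assms(1) calculation] .
  moreover have "map (\<lambda>p. map (\<lambda>x. x ! p) xs ! i) [0..<m] = xs ! i"
    by (rule nth_equalityI) (use proj calculation in auto)
  ultimately show ?case by simp
next
  case (comp k' f gs)
  let ?ys = "map (\<lambda>g. map (\<lambda>p. g (map (\<lambda>x. x ! p) xs)) [0..<m]) gs"
  have "\<forall>x\<in>set ?ys. x \<in> sub_gen F m G"
  proof
    fix y assume "y \<in> set ?ys"
    then obtain g where "g \<in> set gs" "y = map (\<lambda>p. g (map (\<lambda>x. x ! p) xs)) [0..<m]" by auto
    with comp(3,4) show "y \<in> sub_gen F m G" by blast
  qed
  moreover have "length ?ys = k'" using comp by simp
  ultimately have mem: "map (\<lambda>j. f (map (\<lambda>x. x ! j) ?ys)) [0..<m] \<in> sub_gen F m G"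
    using sub_gen.app[OF comp(1)] by blast
  have eq: "map (\<lambda>j. f (map (\<lambda>x. x ! j) ?ys)) [0..<m] = map (\<lambda>p. f (map (\<lambda>g. g (map (\<lambda>x. x ! p) xs)) gs)) [0..<m]"
    by (auto simp: o_def)
  show ?case using mem unfolding eq .
qed


lemma sub_gen_reindex:
  assumes "\<forall>p<N. \<sigma> p < M" "\<forall>g\<in>G. length g = M"
    "\<forall>g\<in>G. map (\<lambda>p. g ! \<sigma> p) [0..<N] \<in> sub_gen F N G2"
    "c \<in> sub_gen F M G"
  shows "map (\<lambda>p. c ! \<sigma> p) [0..<N] \<in> sub_gen F N G2"
  using assms(4)
proof (induction c rule: sub_gen.induct)
  case (gen x) then show ?case using assms(3) by auto
next
  case (app k f xs)
  let ?ys = "map (\<lambda>x. map (\<lambda>p. x ! \<sigma> p) [0..<N]) xs"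
  have "map (\<lambda>j. f (map (\<lambda>x. x ! j) ?ys)) [0..<N] \<in> sub_gen F N G2"
    by (rule sub_gen.app[OF app(1)]) (use app in auto)
  moreover have "map (\<lambda>j. f (map (\<lambda>x. x ! j) ?ys)) [0..<N] =
     map (\<lambda>p. map (\<lambda>j. f (map (\<lambda>x. x ! j) xs)) [0..<M] ! \<sigma> p) [0..<N]"
    using assms(1) by (auto simp: o_def)
  ultimately show ?case by metis
qed




lemma concat_nth_off:
  assumes "r < length Ls" "i < length (Ls ! r)"
  shows "sum_list (map length (take r Ls)) + i < length (concat Ls) \<and>
         concat Ls ! (sum_list (map length (take r Ls)) + i) = Ls ! r ! i"
  using assms
proof (induction Ls arbitrary: r)
  case Nil then show ?case by simp
next
  case (Cons L Ls)
  show ?case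
  proof (cases r)
    case 0 then show ?thesis using Cons by (simp add: nth_append)
  next
    case (Suc r')
    then have "r' < length Ls" "i < length (Ls ! r')" using Cons.prems by auto
    from Cons.IH[OF this] show ?thesis using Suc by (simp add: nth_append)
  qed
qed

lemma sub_gen_rep:
  assumes "\<forall>g\<in>G. length g = m" "x \<in> sub_gen F m G"
  shows "\<exists>gs t. set gs \<subseteq> G \<and> t \<in> term_ops F (length gs) \<and>
           x = map (\<lambda>p. t (map (\<lambda>g. g ! p) gs)) [0..<m]"
  using assms(2)
proof (induction x rule: sub_gen.induct)
  case (gen x)
  have "(\<lambda>xs. xs ! 0) \<in> term_ops F (length [x])" by (simp add: term_ops.proj)
  moreover have "x = map (\<lambda>p. (\<lambda>xs. xs ! 0) (map (\<lambda>g. g ! p) [x])) [0..<m]"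
    using assms(1) gen by (intro nth_equalityI) auto
  ultimately show ?case using gen by (intro exI[of _ "[x]"] exI[of _ "\<lambda>xs. xs ! 0"]) simp
next
  case (app k f xs)
  from app(3) have "\<forall>x\<in>set xs. \<exists>gs t. set gs \<subseteq> G \<and> t \<in> term_ops F (length gs) \<and>
           x = map (\<lambda>p. t (map (\<lambda>g. g ! p) gs)) [0..<m]" by blast
  then obtain GS T where GT: "\<forall>x\<in>set xs. set (GS x) \<subseteq> G \<and> T x \<in> term_ops F (length (GS x)) \<and>
           x = map (\<lambda>p. T x (map (\<lambda>g. g ! p) (GS x))) [0..<m]"
    by metis
  define Ls where "Ls = map GS xs"
  define off where "off r = sum_list (map length (take r Ls))" for r
  define gs where "gs = concat Ls"
  define len where "len r = length (GS (xs ! r))" for r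
  define hs where "hs = map (\<lambda>r ys. T (xs ! r) (map (\<lambda>i. ys ! (off r + i)) [0..<len r])) [0..<length xs]"
  define t where "t = (\<lambda>ys. f (map (\<lambda>h. h ys) hs))"
  have off_bound: "off r + i < length gs" and off_nth: "gs ! (off r + i) = GS (xs ! r) ! i"
    if "r < length xs" "i < len r" for r i
    using concat_nth_off[of r Ls i] that unfolding off_def gs_def Ls_def len_def by auto
  have setgs: "set gs \<subseteq> G" using GT unfolding gs_def Ls_def by auto
  have "t \<in> term_ops F (length gs)"
    unfolding t_def
  proof (rule term_ops.comp[OF app(1)])
    show "length hs = k" using app(2) unfolding hs_def by simp
    show "\<forall>g\<in>set hs. g \<in> term_ops F (length gs)"
    proof
      fix g assume "g \<in> set hs"
      then obtain r where r: "r < length xs" and g: "g = (\<lambda>ys. T (xs ! r) (map (\<lambda>i. ys ! (off r + i)) [0..<len r]))"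
        unfolding hs_def by auto
      have "T (xs ! r) \<in> term_ops F (len r)" using GT r unfolding len_def by auto
      then show "g \<in> term_ops F (length gs)" unfolding g
        by (rule term_ops_proj_list) (use off_bound r in auto)
    qed
  qed
  moreover have "map (\<lambda>j. f (map (\<lambda>x. x ! j) xs)) [0..<m] = map (\<lambda>p. t (map (\<lambda>g. g ! p) gs)) [0..<m]"
  proof (rule map_cong[OF refl])
    fix p assume p: "p \<in> set [0..<m]"
    have "map (\<lambda>x. x ! p) xs = map (\<lambda>h. h (map (\<lambda>g. g ! p) gs)) hs"
    proof (rule nth_equalityI)
      show "length (map (\<lambda>x. x ! p) xs) = length (map (\<lambda>h. h (map (\<lambda>g. g ! p) gs)) hs)"
        unfolding hs_def by simp
      fix r assume "r < length (map (\<lambda>x. x ! p) xs)"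
      then have r: "r < length xs" by simp
      have "map (\<lambda>i. map (\<lambda>g. g ! p) gs ! (off r + i)) [0..<len r] = map (\<lambda>g. g ! p) (GS (xs ! r))"
        by (rule nth_equalityI) (auto simp: len_def off_bound[OF r] off_nth[OF r])
      moreover have "xs ! r ! p = T (xs ! r) (map (\<lambda>g. g ! p) (GS (xs ! r)))"
      proof -
        have "xs ! r = map (\<lambda>p. T (xs ! r) (map (\<lambda>g. g ! p) (GS (xs ! r)))) [0..<m]"
          using GT r by auto
        then have "xs ! r ! p = map (\<lambda>p. T (xs ! r) (map (\<lambda>g. g ! p) (GS (xs ! r)))) [0..<m] ! p"
          by (rule arg_cong[where f="\<lambda>l. l ! p"])
        also have "\<dots> = T (xs ! r) (map (\<lambda>g. g ! p) (GS (xs ! r)))" using p by simp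
        finally show ?thesis .
      qed
      ultimately show "map (\<lambda>x. x ! p) xs ! r = map (\<lambda>h. h (map (\<lambda>g. g ! p) gs)) hs ! r"
        using r unfolding hs_def by simp
    qed
    then show "f (map (\<lambda>x. x ! p) xs) = t (map (\<lambda>g. g ! p) gs)" unfolding t_def by simp
  qed
  ultimately show ?case using setgs by blast
qed



lemma nat_bits_eqI0: "(\<And>i. bit (x::nat) i = bit y i) \<Longrightarrow> x = y"
  by (simp add: bit_eq_iff)

lemma less_pow2_bits: "(x::nat) < 2 ^ n \<longleftrightarrow> (\<forall>i\<ge>n. \<not> bit x i)"
proof
  assume "x < 2 ^ n"
  then have e: "take_bit n x = x" by (simp add: take_bit_nat_eq_self_iff)
  show "\<forall>i\<ge>n. \<not> bit x i"
  proof (intro allI impI)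
    fix i assume "n \<le> i"
    have "bit x i = bit (take_bit n x) i" by (simp only: e)
    also have "\<dots> = (i < n \<and> bit x i)" by (rule bit_take_bit_iff)
    finally show "\<not> bit x i" using \<open>n \<le> i\<close> by simp
  qed
next
  assume h: "\<forall>i\<ge>n. \<not> bit x i"
  have "take_bit n x = x"
  proof (rule nat_bits_eqI0)
    fix i show "bit (take_bit n x) i = bit x i"
      unfolding bit_take_bit_iff using h by (cases "i < n") auto
  qed
  then show "x < 2 ^ n" by (simp add: take_bit_nat_eq_self_iff)
qed

lemma bit_top: "bit (2 ^ n - 1 :: nat) i \<longleftrightarrow> i < n"
  unfolding mask_eq_exp_minus_1[symmetric] bit_mask_iff by simp

lemma bit_top'[simp]: "bit (2 ^ n - Suc 0 :: nat) i \<longleftrightarrow> i < n"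
  using bit_top[of n i] by simp

lemma nat_bits_eqI: "(\<And>i. bit (x::nat) i = bit y i) \<Longrightarrow> x = y"
  by (simp add: bit_eq_iff)

lemma all_bits_top:
  assumes "(p::nat) < 2 ^ n" "\<forall>i<n. bit p i" shows "p = 2 ^ n - 1"
proof (rule nat_bits_eqI)
  fix i
  have "\<forall>i\<ge>n. \<not> bit p i" using assms(1) less_pow2_bits by blast
  then show "bit p i = bit (2 ^ n - 1 :: nat) i" unfolding bit_top using assms(2)
    by (cases "i < n") auto
qed

lemma not_top_bit:
  assumes "(p::nat) < 2 ^ n - 1" shows "\<exists>i<n. \<not> bit p i"
proof (rule ccontr)
  assume "\<not> (\<exists>i<n. \<not> bit p i)"
  then have "\<forall>i<n. bit p i" by blast
  moreover have "p < 2 ^ n" using assms by linarith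
  ultimately have "p = 2 ^ n - 1" by (rule all_bits_top[rotated])
  then show False using assms by linarith
qed

definition ins :: "nat \<Rightarrow> nat \<Rightarrow> nat" where
  "ins j m = take_bit j m + push_bit (Suc j) (drop_bit j m)"
definition del :: "nat \<Rightarrow> nat \<Rightarrow> nat" where
  "del j p = take_bit j p + push_bit j (drop_bit (Suc j) p)"

lemma bit_ins: "bit (ins j m) i \<longleftrightarrow> (i < j \<and> bit m i) \<or> (Suc j \<le> i \<and> bit m (i - 1))"
proof -
  have "bit (ins j m) i \<longleftrightarrow> bit (take_bit j m) i \<or> bit (push_bit (Suc j) (drop_bit j m)) i"
    unfolding ins_def by (rule bit_disjunctive_add_iff) (auto simp del: push_bit_Suc simp: bit_take_bit_iff bit_push_bit_iff)
  also have "\<dots> \<longleftrightarrow> (i < j \<and> bit m i) \<or> (Suc j \<le> i \<and> bit m (i - 1))"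
    by (auto simp del: push_bit_Suc simp: bit_take_bit_iff bit_push_bit_iff bit_drop_bit_eq)
  finally show ?thesis .
qed

lemma bit_del: "bit (del j p) i \<longleftrightarrow> (i < j \<and> bit p i) \<or> (j \<le> i \<and> bit p (Suc i))"
proof -
  have "bit (del j p) i \<longleftrightarrow> bit (take_bit j p) i \<or> bit (push_bit j (drop_bit (Suc j) p)) i"
    unfolding del_def by (rule bit_disjunctive_add_iff) (auto simp del: push_bit_Suc simp: bit_take_bit_iff bit_push_bit_iff)
  also have "\<dots> \<longleftrightarrow> (i < j \<and> bit p i) \<or> (j \<le> i \<and> bit p (Suc i))"
    by (auto simp del: push_bit_Suc simp: bit_take_bit_iff bit_push_bit_iff bit_drop_bit_eq)
  finally show ?thesis .
qed

lemma ins_del: "ins j (del j p) = unset_bit j p"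
  apply (rule nat_bits_eqI)
  subgoal for i by (cases i) (auto simp: bit_ins bit_del bit_unset_bit_iff)
  done

lemma del_ins: "del j (ins j m) = m"
  by (rule nat_bits_eqI) (auto simp: bit_ins bit_del)

lemma ins_bound: "j < n \<Longrightarrow> m < 2 ^ (n - 1) \<Longrightarrow> ins j m < 2 ^ n"
  unfolding less_pow2_bits by (auto simp: bit_ins)

lemma del_bound: "j < n \<Longrightarrow> p < 2 ^ n \<Longrightarrow> del j p < 2 ^ (n - 1)"
  unfolding less_pow2_bits by (auto simp: bit_del)

lemma ins_arith: "ins j m = m mod 2 ^ j + 2 * 2 ^ j * (m div 2 ^ j)"
  by (simp add: ins_def take_bit_eq_mod push_bit_eq_mult drop_bit_eq_div)

lemma ins_strict_mono: "strict_mono (ins j)"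
proof (rule strict_monoI)
  fix m m' :: nat assume "m < m'"
  define d :: nat where "d = 2 ^ j"
  have d: "d > 0" by (simp add: d_def)
  have "m div d \<le> m' div d" using \<open>m < m'\<close> by (simp add: div_le_mono)
  then consider "m div d < m' div d" | "m div d = m' div d" by linarith
  then show "ins j m < ins j m'"
  proof cases
    case 1
    have "m mod d < d" using d by simp
    then have "m mod d + 2 * d * (m div d) < 2 * d * (m div d + 1)" by simp
    also have "\<dots> \<le> 2 * d * (m' div d)" using 1 by (intro mult_le_mono2) simp
    finally show ?thesis unfolding ins_arith d_def[symmetric] by linarith
  next
    case 2
    have "m = (m div d) * d + m mod d" by simp
    moreover have "m' = (m div d) * d + m' mod d" unfolding 2 by simp
    ultimately
    have "m mod d < m' mod d" using \<open>m < m'\<close> by linarith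
    then show ?thesis unfolding ins_arith d_def[symmetric] 2 by linarith
  qed
qed

lemma filter_ins:
  assumes "j < n"
  shows "filter (\<lambda>k. \<not> bit k j) [0..<2 ^ n] = map (ins j) [0..<2 ^ (n - 1)]"
proof (rule sorted_distinct_set_unique)
  show "sorted (filter (\<lambda>k. \<not> bit k j) [0..<2 ^ n])" by (rule sorted_wrt_filter) simp
  show "distinct (filter (\<lambda>k. \<not> bit k j) [0..<2 ^ n])" by simp
  show "sorted (map (ins j) [0..<2 ^ (n - 1)])"
    unfolding sorted_map
    by (rule sorted_wrt_mono_rel[OF _ sorted_upt]) (simp add: strict_mono_less_eq[OF ins_strict_mono])
  show "distinct (map (ins j) [0..<2 ^ (n - 1)])"
    using ins_strict_mono[of j] by (simp add: distinct_map strict_mono_imp_inj_on)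
  show "set (filter (\<lambda>k. \<not> bit k j) [0..<2 ^ n]) = set (map (ins j) [0..<2 ^ (n - 1)])"
  proof (rule set_eqI, rule iffI)
    fix k assume "k \<in> set (filter (\<lambda>k. \<not> bit k j) [0..<2 ^ n])"
    then have k: "k < 2 ^ n" "\<not> bit k j" by auto
    have "ins j (del j k) = k" unfolding ins_del using k(2)
      by (intro nat_bits_eqI) (auto simp: bit_unset_bit_iff)
    moreover have "del j k < 2 ^ (n - 1)" using del_bound[OF assms k(1)] .
    ultimately show "k \<in> set (map (ins j) [0..<2 ^ (n - 1)])" unfolding set_map
      by (intro image_eqI[where x="del j k"]) auto
  next
    fix k assume "k \<in> set (map (ins j) [0..<2 ^ (n - 1)])"
    then obtain m where m: "m < 2 ^ (n - 1)" "k = ins j m" by auto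
    then show "k \<in> set (filter (\<lambda>k. \<not> bit k j) [0..<2 ^ n])"
      using ins_bound[OF assms m(1)] by (auto simp: bit_ins)
  qed
qed



lemma congruence_sub: "congruence A F \<theta> \<Longrightarrow> (x, y) \<in> \<theta> \<Longrightarrow> x \<in> A \<and> y \<in> A"
  unfolding congruence_def by blast

lemma congruence_refl: "congruence A F \<theta> \<Longrightarrow> x \<in> A \<Longrightarrow> (x, x) \<in> \<theta>"
  unfolding congruence_def equiv_def refl_on_def by blast

lemma congruence_sym: "congruence A F \<theta> \<Longrightarrow> (x, y) \<in> \<theta> \<Longrightarrow> (y, x) \<in> \<theta>"
  unfolding congruence_def equiv_def by (meson symD)

lemma congruence_trans: "congruence A F \<theta> \<Longrightarrow> (x, y) \<in> \<theta> \<Longrightarrow> (y, z) \<in> \<theta> \<Longrightarrow> (x, z) \<in> \<theta>"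
  unfolding congruence_def equiv_def by (meson transD)

lemma cube_vec_length[simp]: "length (cube_vec n i a b) = 2 ^ n"
  by (simp add: cube_vec_def)

lemma cube_vec_nth: "p < 2 ^ n \<Longrightarrow> cube_vec n i a b ! p = (if bit p i then b else a)"
  by (simp add: cube_vec_def)

lemma cube_vec_const: "cube_vec n i x x = replicate (2 ^ n) x"
  by (rule nth_equalityI) (simp_all add: cube_vec_nth)

locale cube_setting =
  fixes A :: "'a set" and F :: "'a operation set" and n :: nat
    and q :: "'a list \<Rightarrow> 'a" and \<alpha>s :: "('a \<times> 'a) set list"
  assumes alg: "algebra A F" and mal: "has_malcev A F" and n1: "n \<ge> 1"
    and cube: "strong_cube_term A F n q"
    and len: "length \<alpha>s = n" and cong: "\<forall>i<n. congruence A F (\<alpha>s ! i)"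
begin

definition N :: nat where "N = 2 ^ n"
definition Gen where "Gen = {cube_vec n i a b | i a b. i < n \<and> (a, b) \<in> \<alpha>s ! i}"
definition D where "D = sub_gen F N Gen"

lemma Delta_eq: "Delta A F \<alpha>s = D"
proof -
  have "\<alpha>s \<noteq> []" using len n1 by auto
  then show ?thesis unfolding Delta_def D_def Gen_def N_def len by simp
qed

definition mm where "mm = (SOME m. m \<in> term_ops F 3 \<and> (\<forall>x\<in>A. \<forall>y\<in>A. m [x, x, y] = y \<and> m [y, x, x] = y))"

lemma mm: "mm \<in> term_ops F 3" "\<And>x y. x \<in> A \<Longrightarrow> y \<in> A \<Longrightarrow> mm [x, x, y] = y"
  "\<And>x y. x \<in> A \<Longrightarrow> y \<in> A \<Longrightarrow> mm [y, x, x] = y"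
proof -
  have "\<exists>m. m \<in> term_ops F 3 \<and> (\<forall>x\<in>A. \<forall>y\<in>A. m [x, x, y] = y \<and> m [y, x, x] = y)"
    using mal unfolding has_malcev_def by blast
  then have "mm \<in> term_ops F 3 \<and> (\<forall>x\<in>A. \<forall>y\<in>A. mm [x, x, y] = y \<and> mm [y, x, x] = y)"
    unfolding mm_def by (rule someI_ex)
  then show "mm \<in> term_ops F 3" "\<And>x y. x \<in> A \<Longrightarrow> y \<in> A \<Longrightarrow> mm [x, x, y] = y"
    "\<And>x y. x \<in> A \<Longrightarrow> y \<in> A \<Longrightarrow> mm [y, x, x] = y" by auto
qed

lemma alpha_cong: "i < n \<Longrightarrow> congruence A F (\<alpha>s ! i)" using cong by blast

lemma alpha_A: "i < n \<Longrightarrow> (x, y) \<in> \<alpha>s ! i \<Longrightarrow> x \<in> A \<and> y \<in> A"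
  using congruence_sub[OF alpha_cong] by blast

lemma alpha_refl: "i < n \<Longrightarrow> x \<in> A \<Longrightarrow> (x, x) \<in> \<alpha>s ! i"
  using congruence_refl[OF alpha_cong] by blast

lemma alpha_sym: "i < n \<Longrightarrow> (x, y) \<in> \<alpha>s ! i \<Longrightarrow> (y, x) \<in> \<alpha>s ! i"
  using congruence_sym[OF alpha_cong] by blast

lemma Gen_len_A: "\<forall>g\<in>Gen. length g = N \<and> set g \<subseteq> A"
proof
  fix g assume "g \<in> Gen"
  then obtain i a b where g: "g = cube_vec n i a b" "i < n" "(a, b) \<in> \<alpha>s ! i" unfolding Gen_def by blast
  then have "a \<in> A" "b \<in> A" using alpha_A by auto
  then show "length g = N \<and> set g \<subseteq> A" unfolding g(1) N_def cube_vec_def by auto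
qed

lemma Gen_len: "\<forall>g\<in>Gen. length g = N" using Gen_len_A by blast

lemma D_len_A: "c \<in> D \<Longrightarrow> length c = N \<and> set c \<subseteq> A"
  unfolding D_def using sub_gen_len_A[OF alg Gen_len_A] by blast

lemma D_nth_A: "c \<in> D \<Longrightarrow> p < N \<Longrightarrow> c ! p \<in> A"
  using D_len_A by (metis nth_mem subsetD)

lemma D_term: "t \<in> term_ops F k \<Longrightarrow> length xs = k \<Longrightarrow> set xs \<subseteq> D \<Longrightarrow>
    map (\<lambda>p. t (map (\<lambda>x. x ! p) xs)) [0..<N] \<in> D"
  unfolding D_def by (rule sub_gen_term[OF Gen_len])

lemma Gen_in_D: "i < n \<Longrightarrow> (a, b) \<in> \<alpha>s ! i \<Longrightarrow> cube_vec n i a b \<in> D"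
  unfolding D_def Gen_def by (rule sub_gen.gen) blast

lemma D_const: "x \<in> A \<Longrightarrow> replicate N x \<in> D"
  using Gen_in_D[of 0 x x] alpha_refl[of 0 x] n1 unfolding cube_vec_const N_def by simp

lemma D_reindex:
  assumes "\<forall>p<N. \<sigma> p < N"
    "\<forall>i<n. (\<forall>p<N. bit (\<sigma> p) i = bit p i) \<or> (\<forall>p<N. \<not> bit (\<sigma> p) i) \<or>
            (\<forall>p<N. bit (\<sigma> p) i) \<or> (\<forall>p<N. bit (\<sigma> p) i = (\<not> bit p i))"
    "c \<in> D"
  shows "map (\<lambda>p. c ! \<sigma> p) [0..<N] \<in> D"
  using assms(3) unfolding D_def
proof (rule sub_gen_reindex[OF assms(1) Gen_len, rotated])
  show "\<forall>g\<in>Gen. map (\<lambda>p. g ! \<sigma> p) [0..<N] \<in> sub_gen F N Gen"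
  proof
    fix g assume "g \<in> Gen"
    then obtain i a b where g: "g = cube_vec n i a b" "i < n" "(a, b) \<in> \<alpha>s ! i" unfolding Gen_def by blast
    have ab: "a \<in> A" "b \<in> A" using alpha_A g by auto
    have gi: "map (\<lambda>p. g ! \<sigma> p) [0..<N] = map (\<lambda>p. if bit (\<sigma> p) i then b else a) [0..<N]"
      using assms(1) unfolding g(1) N_def by (auto simp: cube_vec_nth)
    from assms(2) g(2) consider "\<forall>p<N. bit (\<sigma> p) i = bit p i" | "\<forall>p<N. \<not> bit (\<sigma> p) i" |
        "\<forall>p<N. bit (\<sigma> p) i" | "\<forall>p<N. bit (\<sigma> p) i = (\<not> bit p i)" by blast
    then show "map (\<lambda>p. g ! \<sigma> p) [0..<N] \<in> sub_gen F N Gen"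
    proof cases
      case 1
      then have "map (\<lambda>p. g ! \<sigma> p) [0..<N] = cube_vec n i a b"
        unfolding gi by (intro nth_equalityI) (auto simp: cube_vec_nth N_def)
      then show ?thesis using Gen_in_D[OF g(2,3)] unfolding D_def by simp
    next
      case 2
      then have "map (\<lambda>p. g ! \<sigma> p) [0..<N] = cube_vec n i a a"
        unfolding gi by (intro nth_equalityI) (auto simp: cube_vec_nth N_def)
      then show ?thesis using Gen_in_D[OF g(2) alpha_refl[OF g(2) ab(1)]] unfolding D_def by simp
    next
      case 3
      then have "map (\<lambda>p. g ! \<sigma> p) [0..<N] = cube_vec n i b b"
        unfolding gi by (intro nth_equalityI) (auto simp: cube_vec_nth N_def)
      then show ?thesis using Gen_in_D[OF g(2) alpha_refl[OF g(2) ab(2)]] unfolding D_def by simp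
    next
      case 4
      then have "map (\<lambda>p. g ! \<sigma> p) [0..<N] = cube_vec n i b a"
        unfolding gi by (intro nth_equalityI) (auto simp: cube_vec_nth N_def)
      then show ?thesis using Gen_in_D[OF g(2) alpha_sym[OF g(2,3)]] unfolding D_def by simp
    qed
  qed
qed

lemma q_term: "q \<in> term_ops F (N - 1)"
  using cube unfolding strong_cube_term_def N_def by blast

lemma q_cube:
  assumes "i < n" "\<forall>k. y k \<in> A" "\<forall>k. y (unset_bit i k) = y k"
  shows "q (map y [0..<N - 1]) = y (N - 1)"
proof -
  have "q (map (\<lambda>k. y (unset_bit i k)) [0..<2 ^ n - 1]) = y (unset_bit i (2 ^ n - 1))"
    using cube assms(1,2) unfolding strong_cube_term_def by blast
  then show ?thesis using assms(3) unfolding N_def by simp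
qed

lemma q_idem: "x \<in> A \<Longrightarrow> q (replicate (N - 1) x) = x"
  using q_cube[of 0 "\<lambda>_. x"] n1 by (simp add: map_replicate_const)

end


context cube_setting begin

lemma N_ge2: "N \<ge> 2"
proof -
  have "(2::nat) ^ 1 \<le> 2 ^ n" using n1 by (intro power_increasing) auto
  then show ?thesis unfolding N_def by simp
qed

definition R :: "'a \<Rightarrow> 'a \<Rightarrow> 'a list" where "R x y = replicate (N - 1) x @ [y]"

lemma R_len[simp]: "length (R x y) = N" using N_ge2 unfolding R_def by simp

lemma R_nth: "p < N \<Longrightarrow> R x y ! p = (if p < N - 1 then x else y)"
  unfolding R_def by (auto simp: nth_append)

definition g1 where "g1 = {(x, y). x \<in> A \<and> y \<in> A \<and> R x y \<in> D}"

lemma mm3_D: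
  assumes "u \<in> D" "v \<in> D" "w \<in> D"
  shows "map (\<lambda>p. mm [u ! p, v ! p, w ! p]) [0..<N] \<in> D"
  using D_term[OF mm(1), of "[u, v, w]"] assms by simp

lemma R_eqI:
  assumes "length c = N" "\<And>p. p < N - 1 \<Longrightarrow> c ! p = x" "c ! (N - 1) = y"
  shows "c = R x y"
proof (rule nth_equalityI)
  show "length c = length (R x y)" using assms(1) by simp
  fix p assume "p < length c"
  then have p: "p < N" using assms(1) by simp
  show "c ! p = R x y ! p"
  proof (cases "p < N - 1")
    case True then show ?thesis using assms(2) R_nth[OF p] by simp
  next
    case False then have "p = N - 1" using p by linarith
    then show ?thesis using assms(3) R_nth[OF p] False by simp
  qed
qed

lemma g1_refl: "x \<in> A \<Longrightarrow> (x, x) \<in> g1"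
proof -
  assume x: "x \<in> A"
  have "R x x = replicate N x" by (rule nth_equalityI) (auto simp: R_nth)
  then show ?thesis using D_const[OF x] x unfolding g1_def by simp
qed

lemma g1_sym: "(x, y) \<in> g1 \<Longrightarrow> (y, x) \<in> g1"
proof -
  assume h: "(x, y) \<in> g1"
  then have xy: "x \<in> A" "y \<in> A" "R x y \<in> D" unfolding g1_def by auto
  have "map (\<lambda>p. mm [replicate N y ! p, R x y ! p, replicate N x ! p]) [0..<N] \<in> D"
    by (rule mm3_D) (use D_const xy in auto)
  moreover have "map (\<lambda>p. mm [replicate N y ! p, R x y ! p, replicate N x ! p]) [0..<N] = R y x"
    by (rule R_eqI) (use xy mm N_ge2 in \<open>auto simp: R_nth\<close>)
  ultimately show ?thesis using xy unfolding g1_def by simp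
qed

lemma g1_trans: "(x, y) \<in> g1 \<Longrightarrow> (y, z) \<in> g1 \<Longrightarrow> (x, z) \<in> g1"
proof -
  assume "(x, y) \<in> g1" "(y, z) \<in> g1"
  then have xy: "x \<in> A" "y \<in> A" "z \<in> A" "R x y \<in> D" "R y z \<in> D" unfolding g1_def by auto
  have "map (\<lambda>p. mm [R x y ! p, replicate N y ! p, R y z ! p]) [0..<N] \<in> D"
    by (rule mm3_D) (use D_const xy in auto)
  moreover have "map (\<lambda>p. mm [R x y ! p, replicate N y ! p, R y z ! p]) [0..<N] = R x z"
    by (rule R_eqI) (use xy mm N_ge2 in \<open>auto simp: R_nth\<close>)
  ultimately show ?thesis using xy unfolding g1_def by simp
qed

lemma g1_compat:
  assumes "(k, f) \<in> F" "length xs = k" "length ys = k" "list_all2 (\<lambda>x y. (x, y) \<in> g1) xs ys"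
  shows "(f xs, f ys) \<in> g1"
proof -
  let ?zs = "map (\<lambda>r. R (xs ! r) (ys ! r)) [0..<k]"
  have xyA: "set xs \<subseteq> A" "set ys \<subseteq> A" "\<forall>r<k. R (xs ! r) (ys ! r) \<in> D"
    using assms(2-4) unfolding g1_def list_all2_conv_all_nth
    by (auto simp: in_set_conv_nth)
  have "map (\<lambda>j. f (map (\<lambda>x. x ! j) ?zs)) [0..<N] \<in> D"
    unfolding D_def by (rule sub_gen.app[OF assms(1)]) (use xyA in \<open>auto simp: D_def\<close>)
  moreover have "map (\<lambda>j. f (map (\<lambda>x. x ! j) ?zs)) [0..<N] = R (f xs) (f ys)"
  proof (rule R_eqI)
    fix p assume p: "p < N - 1"
    have "map (\<lambda>x. x ! p) ?zs = xs"
      by (rule nth_equalityI) (use assms(2) p in \<open>auto simp: R_nth\<close>)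
    moreover have "p < N" using p by linarith
    ultimately show "map (\<lambda>j. f (map (\<lambda>x. x ! j) ?zs)) [0..<N] ! p = f xs" by simp
  next
    have "map (\<lambda>x. x ! (N - 1)) ?zs = ys"
      by (rule nth_equalityI) (use assms(2,3) N_ge2 in \<open>auto simp: R_nth\<close>)
    then show "map (\<lambda>j. f (map (\<lambda>x. x ! j) ?zs)) [0..<N] ! (N - 1) = f ys" using N_ge2 by simp
  qed simp
  moreover have "f xs \<in> A" "f ys \<in> A" using algebraD[OF alg assms(1)] assms(2,3) xyA by auto
  ultimately show ?thesis unfolding g1_def by simp
qed

lemma g1_congruence: "congruence A F g1"
  unfolding congruence_def
proof (intro conjI)
  show "g1 \<subseteq> A \<times> A" unfolding g1_def by auto
  have "g1 \<subseteq> A \<times> A" unfolding g1_def by auto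
  moreover have "refl_on A g1" unfolding refl_on_def using g1_refl by blast
  moreover have "sym g1" unfolding sym_def using g1_sym by blast
  moreover have "trans g1" unfolding trans_def using g1_trans by blast
  ultimately show "equiv A g1" unfolding equiv_def refl_on_def by blast
  show "\<forall>(k, f)\<in>F. \<forall>xs ys. length xs = k \<and> length ys = k \<and> list_all2 (\<lambda>x y. (x, y) \<in> g1) xs ys \<longrightarrow>
      (f xs, f ys) \<in> g1"
    using g1_compat by blast
qed

end


lemma concat_snoc_upt:
  assumes "\<forall>i<m. h i = f i" "h m = g"
  shows "concat (map f [0..<m]) @ g = concat (map h [0..<Suc m])"
proof -
  have "map f [0..<m] = map h [0..<m]" using assms(1) by (intro map_cong) auto
  then show ?thesis using assms(2) by (simp only: upt_Suc map_append concat_append) simp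
qed

lemma length_concat_upt: "length (concat (map f [0..<m])) = (\<Sum>i<m. length (f i))"
  by (simp add: length_concat interv_sum_list_conv_sum_set_nat atLeast0LessThan o_def)

context cube_setting begin

lemma N1_eq: "N - 1 = 2 ^ n - 1" unfolding N_def by simp

lemma bit_N1: "bit (N - 1) i \<longleftrightarrow> i < n" unfolding N1_eq by (rule bit_top)

lemma bit_N1'[simp]: "bit (N - Suc 0) i \<longleftrightarrow> i < n" using bit_N1 by simp

lemma lt_N_bits: "p < N \<longleftrightarrow> (\<forall>i\<ge>n. \<not> bit p i)" unfolding N_def by (rule less_pow2_bits)

lemma take_as_map: "length c = N \<Longrightarrow> take (N - 1) c = map (\<lambda>j. c ! j) [0..<N - 1]"
  by (rule nth_equalityI) auto

lemma top_q_g1: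
  assumes c: "c \<in> D"
  shows "(c ! (N - 1), q (take (N - 1) c)) \<in> g1"
proof -
  define \<sigma> where "\<sigma> j p = or j (xor (N - 1) p)" for j p :: nat
  have bs: "bit (\<sigma> j p) i \<longleftrightarrow> bit j i \<or> ((i < n) \<noteq> bit p i)" for j p i
    unfolding \<sigma>_def bit_or_iff bit_xor_iff bit_N1 by simp
  have sb: "\<sigma> j p < N" if "j < N" "p < N" for j p
    using that unfolding lt_N_bits bs by auto
  have cl: "length c = N" "set c \<subseteq> A" using D_len_A[OF c] by auto
  define X where "X j = map (\<lambda>p. c ! \<sigma> j p) [0..<N]" for j
  have XD: "X j \<in> D" if j: "j < N" for j
    unfolding X_def
  proof (rule D_reindex[OF _ _ c])
    show "\<forall>p<N. \<sigma> j p < N" using sb j by blast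
    show "\<forall>i<n. (\<forall>p<N. bit (\<sigma> j p) i = bit p i) \<or> (\<forall>p<N. \<not> bit (\<sigma> j p) i) \<or>
            (\<forall>p<N. bit (\<sigma> j p) i) \<or> (\<forall>p<N. bit (\<sigma> j p) i = (\<not> bit p i))"
      unfolding bs by auto
  qed
  define Y where "Y = map (\<lambda>p. q (map (\<lambda>x. x ! p) (map X [0..<N - 1]))) [0..<N]"
  have YD: "Y \<in> D" unfolding Y_def
    by (rule D_term[OF q_term]) (use XD in auto)
  have Ynth: "Y ! p = q (map (\<lambda>j. c ! \<sigma> j p) [0..<N - 1])" if "p < N" for p
    using that unfolding Y_def X_def by (simp add: o_def)
  have "Y = R (c ! (N - 1)) (q (take (N - 1) c))"
  proof (rule R_eqI)
    show "length Y = N" unfolding Y_def by simp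
  next
    fix p assume p: "p < N - 1"
    then have pN: "p < N" by linarith
    obtain i0 where i0: "i0 < n" "\<not> bit p i0" using not_top_bit[of p n] p unfolding N1_eq by blast
    define y where "y j = (if \<sigma> j p < N then c ! \<sigma> j p else c ! 0)" for j
    have yA: "\<forall>k. y k \<in> A" unfolding y_def using cl N_ge2 by (auto intro!: nth_mem[THEN subsetD[OF cl(2)]])
    have sig_un: "\<sigma> (unset_bit i0 k) p = \<sigma> k p" for k
      by (rule nat_bits_eqI) (use i0 in \<open>auto simp: bs bit_unset_bit_iff\<close>)
    have yun: "\<forall>k. y (unset_bit i0 k) = y k" unfolding y_def sig_un by simp
    have my: "map y [0..<N - 1] = map (\<lambda>j. c ! \<sigma> j p) [0..<N - 1]"
      using sb pN unfolding y_def by auto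
    have "\<sigma> (N - 1) p = N - 1"
      by (rule nat_bits_eqI) (use pN in \<open>auto simp: bs bit_N1 lt_N_bits\<close>)
    then have yN: "y (N - 1) = c ! (N - 1)" unfolding y_def using N_ge2 by simp
    have "q (map (\<lambda>j. c ! \<sigma> j p) [0..<N - 1]) = c ! (N - 1)"
      using q_cube[OF i0(1) yA yun] unfolding my yN .
    then show "Y ! p = c ! (N - 1)" using Ynth[OF pN] by simp
  next
    have "\<sigma> j (N - 1) = j" if "j < N" for j
      by (rule nat_bits_eqI) (use that in \<open>auto simp: bs bit_N1 lt_N_bits\<close>)
    then have e: "map (\<lambda>j. c ! \<sigma> j (N - 1)) [0..<N - 1] = map (\<lambda>j. c ! j) [0..<N - 1]" by simp
    have "Y ! (N - 1) = q (map (\<lambda>j. c ! \<sigma> j (N - 1)) [0..<N - 1])"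
      using Ynth[of "N - 1"] N_ge2 by simp
    also have "\<dots> = q (map (\<lambda>j. c ! j) [0..<N - 1])" unfolding e ..
    also have "\<dots> = q (take (N - 1) c)" unfolding take_as_map[OF cl(1)] ..
    finally show "Y ! (N - 1) = q (take (N - 1) c)" .
  qed
  moreover have "c ! (N - 1) \<in> A" using D_nth_A[OF c] N_ge2 by simp
  moreover have "q (take (N - 1) c) \<in> A"
    by (rule term_ops_in_A[OF alg q_term]) (use cl in \<open>auto dest: in_set_takeD\<close>)
  ultimately show ?thesis using YD unfolding g1_def by simp
qed

end


context cube_setting begin

lemma g1_centralizes: "centralizes A F \<alpha>s g1"
  unfolding centralizes_def Let_def len
proof (intro allI impI)
  fix as bs :: "nat \<Rightarrow> 'a list" and t
  assume H: "\<forall>i<n. length (as i) = length (bs i) \<and> set (as i) \<subseteq> A \<and> set (bs i) \<subseteq> A \<and>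
              as i \<noteq> bs i \<and> list_all2 (\<lambda>x y. (x, y) \<in> \<alpha>s ! i) (as i) (bs i)"
    and Ht: "t \<in> term_ops F (\<Sum>i<n. length (as i))"
    and Hs: "\<forall>s. \<not> (\<forall>i<n - 1. s i) \<longrightarrow>
          (t (concat (map (\<lambda>i. if s i then bs i else as i) [0..<n - 1]) @ as (n - 1)),
           t (concat (map (\<lambda>i. if s i then bs i else as i) [0..<n - 1]) @ bs (n - 1))) \<in> g1"
  define sel where "sel s = concat (map (\<lambda>i. if s i then bs i else as i) [0..<n])" for s
  define T where "T s = t (sel s)" for s
  have sel_len: "length (sel s) = (\<Sum>i<n. length (as i))" for s
    unfolding sel_def length_concat_upt by (rule sum.cong) (use H in auto)
  have sel_A: "set (sel s) \<subseteq> A" for s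
    unfolding sel_def using H by auto
  have TA: "T s \<in> A" for s
    unfolding T_def by (rule term_ops_in_A[OF alg Ht sel_len sel_A])
  have Tcong: "T s = T s'" if "\<forall>i<n. s i = s' i" for s s'
  proof -
    have "map (\<lambda>i. if s i then bs i else as i) [0..<n] = map (\<lambda>i. if s' i then bs i else as i) [0..<n]"
      using that by (intro map_cong) auto
    then have "sel s = sel s'" unfolding sel_def by (rule arg_cong)
    then show ?thesis unfolding T_def by (rule arg_cong)
  qed
  have nS: "Suc (n - 1) = n" using n1 by simp
  have snoc: "concat (map (\<lambda>i. if s i then bs i else as i) [0..<n - 1]) @ (if b then bs (n - 1) else as (n - 1))
      = sel (s(n - 1 := b))" for s b
    unfolding sel_def by (subst nS[symmetric], rule concat_snoc_upt) auto
  have snoc_bs: "concat (map bs [0..<n - 1]) @ (if b then bs (n - 1) else as (n - 1))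
      = sel (\<lambda>i. i \<noteq> n - 1 \<or> b)" for b
    unfolding sel_def by (subst nS[symmetric], rule concat_snoc_upt) auto
  have cubeD: "map (\<lambda>p. T (\<lambda>i. bit p i \<and> \<mu> i)) [0..<N] \<in> D" for \<mu>
  proof -
    define gens where "gens = concat (map (\<lambda>i. map (\<lambda>r. cube_vec n i (as i ! r)
        (if \<mu> i then bs i ! r else as i ! r)) [0..<length (as i)]) [0..<n])"
    have gl: "length gens = (\<Sum>i<n. length (as i))"
      unfolding gens_def length_concat_upt by simp
    have gD: "set gens \<subseteq> D"
    proof
      fix g assume "g \<in> set gens"
      then obtain i r where ir: "i < n" "r < length (as i)"
        and g: "g = cube_vec n i (as i ! r) (if \<mu> i then bs i ! r else as i ! r)"
        unfolding gens_def by auto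
      have aA: "as i ! r \<in> A" using H ir by (meson nth_mem subsetD)
      have "(as i ! r, if \<mu> i then bs i ! r else as i ! r) \<in> \<alpha>s ! i"
        using H ir list_all2_nthD[of _ "as i" "bs i" r] alpha_refl[OF ir(1) aA] by auto
      then show "g \<in> D" unfolding g by (rule Gen_in_D[OF ir(1)])
    qed
    have mem: "map (\<lambda>p. t (map (\<lambda>x. x ! p) gens)) [0..<N] \<in> D"
      by (rule D_term[OF Ht gl gD])
    have geq: "map (\<lambda>x. x ! p) gens = sel (\<lambda>i. bit p i \<and> \<mu> i)" if p: "p < N" for p
    proof -
      have inner: "map (\<lambda>r. cube_vec n i (as i ! r) (if \<mu> i then bs i ! r else as i ! r) ! p) [0..<length (as i)]
          = (if bit p i \<and> \<mu> i then bs i else as i)" if i: "i < n" for i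
        by (rule nth_equalityI) (use H i p in \<open>auto simp: cube_vec_nth N_def\<close>)
      have "map (\<lambda>x. x ! p) gens = concat (map (\<lambda>i. map (\<lambda>r. cube_vec n i (as i ! r)
          (if \<mu> i then bs i ! r else as i ! r) ! p) [0..<length (as i)]) [0..<n])"
        unfolding gens_def by (simp add: map_concat o_def)
      also have "\<dots> = sel (\<lambda>i. bit p i \<and> \<mu> i)"
        unfolding sel_def by (rule arg_cong[where f=concat], rule map_cong) (use inner in auto)
      finally show ?thesis .
    qed
    have eq: "map (\<lambda>p. t (map (\<lambda>x. x ! p) gens)) [0..<N] = map (\<lambda>p. T (\<lambda>i. bit p i \<and> \<mu> i)) [0..<N]"
      by (rule map_cong[OF refl]) (simp add: T_def geq)
    show ?thesis using mem unfolding eq .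
  qed
  define x0 where "x0 = T (\<lambda>i. i \<noteq> n - 1)"
  define T1 where "T1 = T (\<lambda>_. True)"
  define C where "C = map (\<lambda>p. T (\<lambda>i. bit p i \<and> True)) [0..<N]"
  define C0 where "C0 = map (\<lambda>p. T (\<lambda>i. bit p i \<and> i \<noteq> n - 1)) [0..<N]"
  define W where "W = map (\<lambda>p. mm [C ! p, C0 ! p, replicate N x0 ! p]) [0..<N]"
  have CD: "C \<in> D" using cubeD[of "\<lambda>_. True"] unfolding C_def .
  have C0D: "C0 \<in> D" using cubeD[of "\<lambda>i. i \<noteq> n - 1"] unfolding C0_def .
  have x0D: "replicate N x0 \<in> D" unfolding x0_def by (rule D_const[OF TA])
  have WD: "W \<in> D" unfolding W_def by (rule mm3_D[OF CD C0D x0D])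
  have Wnth: "W ! p = mm [T (\<lambda>i. bit p i \<and> True), T (\<lambda>i. bit p i \<and> i \<noteq> n - 1), x0]" if "p < N" for p
    using that unfolding W_def C_def C0_def by simp
  have WN: "W ! (N - 1) = T1"
  proof -
    have "T (\<lambda>i. bit (N - 1) i \<and> True) = T1" unfolding T1_def by (rule Tcong) (simp add: bit_N1)
    moreover have "T (\<lambda>i. bit (N - 1) i \<and> i \<noteq> n - 1) = x0" unfolding x0_def by (rule Tcong) (simp add: bit_N1)
    ultimately show ?thesis using Wnth[of "N - 1"] N_ge2 mm(3)[OF TA TA] unfolding T1_def x0_def by simp
  qed
  have Wp: "(W ! p, x0) \<in> g1" if p: "p < N - 1" for p
  proof -
    have pN: "p < N" using p by linarith
    show ?thesis
    proof (cases "bit p (n - 1)")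
      case False
      have "T (\<lambda>i. bit p i \<and> True) = T (\<lambda>i. bit p i \<and> i \<noteq> n - 1)"
        by (rule Tcong) (use False in auto)
      then have "W ! p = x0" using Wnth[OF pN] mm(2)[OF TA TA] unfolding x0_def by simp
      then show ?thesis using g1_refl[OF TA] unfolding x0_def by simp
    next
      case True
      define s where "s i = bit p i" for i
      have ns: "\<not> (\<forall>i<n - 1. s i)"
      proof
        assume "\<forall>i<n - 1. s i"
        then have "\<forall>i<n. bit p i" using True unfolding s_def
          by (metis Suc_pred' less_Suc_eq n1 less_le_trans zero_less_one)
        then have "p = 2 ^ n - 1" using all_bits_top[of p n] pN unfolding N_def by blast
        then show False using p unfolding N1_eq by simp
      qed
      have "(t (concat (map (\<lambda>i. if s i then bs i else as i) [0..<n - 1]) @ as (n - 1)),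
             t (concat (map (\<lambda>i. if s i then bs i else as i) [0..<n - 1]) @ bs (n - 1))) \<in> g1"
        using Hs ns by blast
      moreover have "concat (map (\<lambda>i. if s i then bs i else as i) [0..<n - 1]) @ as (n - 1) = sel (s(n - 1 := False))"
        using snoc[of s False] by simp
      moreover have "concat (map (\<lambda>i. if s i then bs i else as i) [0..<n - 1]) @ bs (n - 1) = sel (s(n - 1 := True))"
        using snoc[of s True] by simp
      ultimately have h: "(T (s(n - 1 := False)), T (s(n - 1 := True))) \<in> g1" unfolding T_def by simp
      have e1: "T (\<lambda>i. bit p i \<and> True) = T (s(n - 1 := True))"
        by (rule Tcong) (use True in \<open>auto simp: s_def\<close>)
      have e0: "T (\<lambda>i. bit p i \<and> i \<noteq> n - 1) = T (s(n - 1 := False))"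
        by (rule Tcong) (auto simp: s_def)
      let ?a = "T (s(n - 1 := True))" and ?b = "T (s(n - 1 := False))"
      have "(mm [?a, ?b, x0], mm [?b, ?b, x0]) \<in> g1"
        by (rule term_ops_cong[OF g1_congruence mm(1)])
          (use g1_sym[OF h] g1_refl[OF TA] g1_refl[OF TA] in \<open>auto simp: x0_def\<close>)
      moreover have "mm [?b, ?b, x0] = x0" using mm(2)[OF TA TA] unfolding x0_def by simp
      moreover have "W ! p = mm [?a, ?b, x0]" using Wnth[OF pN] e0 e1 by simp
      ultimately show ?thesis by simp
    qed
  qed
  have "(W ! (N - 1), q (take (N - 1) W)) \<in> g1" by (rule top_q_g1[OF WD])
  then have a1: "(T1, q (take (N - 1) W)) \<in> g1" unfolding WN .
  have WL: "length W = N" unfolding W_def by simp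
  have "(q (take (N - 1) W), q (replicate (N - 1) x0)) \<in> g1"
    by (rule term_ops_cong[OF g1_congruence q_term])
      (use WL Wp in \<open>auto simp: list_all2_conv_all_nth\<close>)
  then have a2: "(q (take (N - 1) W), x0) \<in> g1" using q_idem[OF TA] unfolding x0_def by simp
  have "(x0, T1) \<in> g1" using g1_sym[OF g1_trans[OF a1 a2]] .
  moreover have "concat (map bs [0..<n - 1]) @ as (n - 1) = sel (\<lambda>i. i \<noteq> n - 1)"
    using snoc_bs[of False] by simp
  moreover have "concat (map bs [0..<n - 1]) @ bs (n - 1) = sel (\<lambda>i. True)"
    using snoc_bs[of True] by simp
  ultimately show "(t (concat (map bs [0..<n - 1]) @ as (n - 1)), t (concat (map bs [0..<n - 1]) @ bs (n - 1))) \<in> g1"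
    unfolding x0_def T1_def T_def by simp
qed

end


lemma nth_take_drop_skip:
  assumes "j < length xs" "i < length xs - 1"
  shows "(take j xs @ drop (Suc j) xs) ! i = xs ! (if i < j then i else Suc i)"
proof (cases "i < j")
  case True then show ?thesis using assms by (simp add: nth_append)
next
  case False
  then have "(take j xs @ drop (Suc j) xs) ! i = drop (Suc j) xs ! (i - j)"
    using assms by (simp add: nth_append)
  also have "\<dots> = xs ! (Suc j + (i - j))" using assms False by (subst nth_drop) auto
  also have "Suc j + (i - j) = Suc i" using False by simp
  finally show ?thesis using False by simp
qed

context cube_setting begin

lemma comm_sub_g1: "commutator A F \<alpha>s \<subseteq> g1"
  unfolding commutator_def using g1_congruence g1_centralizes by blast

definition face :: "nat \<Rightarrow> 'a list \<Rightarrow> 'a list" where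
  "face j a = map (\<lambda>k. a ! k) (filter (\<lambda>k. \<not> bit k j) [0..<2 ^ n])"

definition sub\<alpha> :: "nat \<Rightarrow> ('a \<times> 'a) set list" where
  "sub\<alpha> j = take j \<alpha>s @ drop (Suc j) \<alpha>s"

lemma sub\<alpha>_len: "j < n \<Longrightarrow> length (sub\<alpha> j) = n - 1"
  unfolding sub\<alpha>_def using len by simp

lemma sub\<alpha>_nth: "j < n \<Longrightarrow> i < n - 1 \<Longrightarrow> sub\<alpha> j ! i = \<alpha>s ! (if i < j then i else Suc i)"
  unfolding sub\<alpha>_def using nth_take_drop_skip[of j \<alpha>s i] len by simp

definition M :: nat where "M = 2 ^ (n - 1)"
definition Gen' where "Gen' j = {cube_vec (n - 1) i a b | i a b. i < n - 1 \<and> (a, b) \<in> sub\<alpha> j ! i}"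

lemma Delta_sub: "j < n \<Longrightarrow> n \<ge> 2 \<Longrightarrow> Delta A F (sub\<alpha> j) = sub_gen F M (Gen' j)"
proof -
  assume j: "j < n" and n2: "n \<ge> 2"
  have l: "length (sub\<alpha> j) = n - 1" using sub\<alpha>_len[OF j] .
  then have "sub\<alpha> j \<noteq> []" using n2 by auto
  note l this
  then show ?thesis unfolding Delta_def M_def Gen'_def by simp
qed

lemma face_eq: "j < n \<Longrightarrow> face j a = map (\<lambda>m. a ! ins j m) [0..<M]"
  unfolding face_def M_def by (simp add: filter_ins)

lemma M_N: "N = 2 * M" if "n \<ge> 1"
  using that unfolding N_def M_def by (metis One_nat_def Suc_pred' less_eq_Suc_le power_Suc)

lemma E_in_D:
  assumes a: "length a = N" "set a \<subseteq> A" and j: "j < n"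
    and fj: "face j a \<in> Delta A F (sub\<alpha> j)"
  shows "map (\<lambda>p. a ! unset_bit j p) [0..<N] \<in> D"
proof (cases "n = 1")
  case True
  then have j0: "j = 0" using j by simp
  have "unset_bit j p = 0" if "p < N" for p
  proof (rule nat_bits_eqI)
    fix i
    have h: "\<forall>i\<ge>n. \<not> bit p i" using that lt_N_bits by blast
    show "bit (unset_bit j p) i = bit 0 i"
      using h unfolding bit_unset_bit_iff j0 True by (cases i) auto
  qed
  then have "map (\<lambda>p. a ! unset_bit j p) [0..<N] = replicate N (a ! 0)"
    by (intro nth_equalityI) auto
  moreover have "a ! 0 \<in> A"
  proof -
    have "0 < length a" using a(1) N_ge2 by simp
    then have "a ! 0 \<in> set a" by (rule nth_mem)
    then show ?thesis using a(2) by blast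
  qed
  ultimately show ?thesis using D_const by simp
next
  case False
  then have n2: "n \<ge> 2" using n1 by simp
  have fj': "map (\<lambda>m. a ! ins j m) [0..<M] \<in> sub_gen F M (Gen' j)"
    using fj unfolding face_eq[OF j] Delta_sub[OF j n2] .
  have "map (\<lambda>p. map (\<lambda>m. a ! ins j m) [0..<M] ! del j p) [0..<N] \<in> sub_gen F N Gen"
  proof (rule sub_gen_reindex[OF _ _ _ fj'])
    show "\<forall>p<N. del j p < M" using del_bound[OF j] unfolding N_def M_def by blast
    show "\<forall>g\<in>Gen' j. length g = M" unfolding Gen'_def M_def by auto
    show "\<forall>g\<in>Gen' j. map (\<lambda>p. g ! del j p) [0..<N] \<in> sub_gen F N Gen"
    proof
      fix g assume "g \<in> Gen' j"
      then obtain i x y where g: "g = cube_vec (n - 1) i x y" "i < n - 1" "(x, y) \<in> sub\<alpha> j ! i"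
        unfolding Gen'_def by blast
      define i2 where "i2 = (if i < j then i else Suc i)"
      have i2: "i2 < n" "(x, y) \<in> \<alpha>s ! i2" using g sub\<alpha>_nth[OF j g(2)] unfolding i2_def by auto
      have "map (\<lambda>p. g ! del j p) [0..<N] = cube_vec n i2 x y"
      proof (rule nth_equalityI)
        fix p assume "p < length (map (\<lambda>p. g ! del j p) [0..<N])"
        then have p: "p < N" by simp
        have "del j p < 2 ^ (n - 1)" using del_bound[OF j] p unfolding N_def by blast
        then have "g ! del j p = (if bit (del j p) i then y else x)" unfolding g(1) by (rule cube_vec_nth)
        also have "bit (del j p) i = bit p i2" unfolding bit_del i2_def by (cases "i < j") simp_all
        finally show "map (\<lambda>p. g ! del j p) [0..<N] ! p = cube_vec n i2 x y ! p"
          using p by (simp add: cube_vec_nth N_def)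
      qed (simp add: N_def)
      then show "map (\<lambda>p. g ! del j p) [0..<N] \<in> sub_gen F N Gen"
        using Gen_in_D[OF i2] unfolding D_def by simp
    qed
  qed
  moreover have "map (\<lambda>p. map (\<lambda>m. a ! ins j m) [0..<M] ! del j p) [0..<N] = map (\<lambda>p. a ! unset_bit j p) [0..<N]"
  proof (rule map_cong[OF refl])
    fix p assume "p \<in> set [0..<N]"
    then have "del j p < M" using del_bound[OF j] unfolding N_def M_def by auto
    then show "map (\<lambda>m. a ! ins j m) [0..<M] ! del j p = a ! unset_bit j p" by (simp add: ins_del)
  qed
  ultimately show ?thesis unfolding D_def by simp
qed

lemma backward:
  assumes a: "length a = N" "set a \<subseteq> A"
    and faces: "\<forall>j<n. face j a \<in> Delta A F (sub\<alpha> j)"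
    and comm: "(q (take (N - 1) a), a ! (N - 1)) \<in> commutator A F \<alpha>s"
  shows "a \<in> D"
proof -
  have aA: "a ! p \<in> A" if "p < N" for p using a that by (metis nth_mem subsetD)
  have E: "map (\<lambda>p. a ! unset_bit j p) [0..<N] \<in> D" if "j < n" for j
    using E_in_D[OF a that] faces that by blast
  define Z where "Z j = map (\<lambda>p. a ! and p j) [0..<N]" for j
  have and_lt: "and p j < N" if "p < N" for p j :: nat
    using that unfolding lt_N_bits by (auto simp: bit_and_iff)
  have ZD: "Z j \<in> D" if j: "j < N - 1" for j
  proof -
    obtain i0 where i0: "i0 < n" "\<not> bit j i0" using not_top_bit[of j n] j unfolding N1_eq by blast
    have "map (\<lambda>p. map (\<lambda>p. a ! unset_bit i0 p) [0..<N] ! and p j) [0..<N] \<in> D"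
    proof (rule D_reindex[OF _ _ E[OF i0(1)]])
      show "\<forall>p<N. and p j < N" using and_lt by blast
      show "\<forall>i<n. (\<forall>p<N. bit (and p j) i = bit p i) \<or> (\<forall>p<N. \<not> bit (and p j) i) \<or>
            (\<forall>p<N. bit (and p j) i) \<or> (\<forall>p<N. bit (and p j) i = (\<not> bit p i))"
        by (auto simp: bit_and_iff)
    qed
    moreover have "map (\<lambda>p. map (\<lambda>p. a ! unset_bit i0 p) [0..<N] ! and p j) [0..<N] = Z j"
      unfolding Z_def
    proof (rule map_cong[OF refl])
      fix p assume "p \<in> set [0..<N]"
      then have "and p j < N" using and_lt by auto
      moreover have "unset_bit i0 (and p j) = and p j"
        by (rule nat_bits_eqI) (use i0 in \<open>auto simp: bit_unset_bit_iff bit_and_iff\<close>)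
      ultimately show "map (\<lambda>p. a ! unset_bit i0 p) [0..<N] ! and p j = a ! and p j" by simp
    qed
    ultimately show ?thesis by simp
  qed
  define b where "b = map (\<lambda>p. q (map (\<lambda>x. x ! p) (map Z [0..<N - 1]))) [0..<N]"
  have bD: "b \<in> D" unfolding b_def by (rule D_term[OF q_term]) (use ZD in auto)
  have bnth: "b ! p = q (map (\<lambda>j. a ! and p j) [0..<N - 1])" if "p < N" for p
    using that unfolding b_def Z_def by (simp add: o_def)
  have b_low: "b ! p = a ! p" if p: "p < N - 1" for p
  proof -
    have pN: "p < N" using p by linarith
    obtain i0 where i0: "i0 < n" "\<not> bit p i0" using not_top_bit[of p n] p unfolding N1_eq by blast
    define y where "y j = a ! and p j" for j
    have yA: "\<forall>k. y k \<in> A" unfolding y_def using aA and_lt pN by blast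
    have "and p (unset_bit i0 k) = and p k" for k
      by (rule nat_bits_eqI) (use i0 in \<open>auto simp: bit_unset_bit_iff bit_and_iff\<close>)
    then have yun: "\<forall>k. y (unset_bit i0 k) = y k" unfolding y_def by simp
    have pb: "i < n" if "bit p i" for i using pN lt_N_bits not_le that by blast
    have "and p (N - 1) = p"
      by (rule nat_bits_eqI) (use pb in \<open>auto simp: bit_and_iff bit_N1\<close>)
    then have "y (N - 1) = a ! p" unfolding y_def by simp
    moreover have "q (map y [0..<N - 1]) = y (N - 1)" by (rule q_cube[OF i0(1) yA yun])
    ultimately show ?thesis using bnth[OF pN] unfolding y_def by simp
  qed
  define bt where "bt = q (take (N - 1) a)"
  have b_top: "b ! (N - 1) = bt"
  proof -
    have "and (N - 1) j = j" if "j < N" for j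
    proof -
      have pb: "i < n" if "bit j i" for i using \<open>j < N\<close> lt_N_bits not_le that by blast
      show ?thesis by (rule nat_bits_eqI) (use pb in \<open>auto simp: bit_and_iff bit_N1\<close>)
    qed
    then have e: "map (\<lambda>j. a ! and (N - 1) j) [0..<N - 1] = map (\<lambda>j. a ! j) [0..<N - 1]" by simp
    have "b ! (N - 1) = q (map (\<lambda>j. a ! and (N - 1) j) [0..<N - 1])" using bnth N_ge2 by simp
    also have "\<dots> = q (map (\<lambda>j. a ! j) [0..<N - 1])" unfolding e ..
    also have "\<dots> = bt" unfolding bt_def take_as_map[OF a(1)] ..
    finally show ?thesis .
  qed
  have btA: "bt \<in> A" using D_nth_A[OF bD, of "N - 1"] N_ge2 b_top by simp
  have "(bt, a ! (N - 1)) \<in> g1" using comm comm_sub_g1 unfolding bt_def by blast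
  then have RD: "R bt (a ! (N - 1)) \<in> D" unfolding g1_def by simp
  have "map (\<lambda>p. mm [b ! p, replicate N bt ! p, R bt (a ! (N - 1)) ! p]) [0..<N] \<in> D"
    by (rule mm3_D[OF bD D_const[OF btA] RD])
  moreover have "map (\<lambda>p. mm [b ! p, replicate N bt ! p, R bt (a ! (N - 1)) ! p]) [0..<N] = a"
  proof (rule nth_equalityI)
    fix p assume "p < length (map (\<lambda>p. mm [b ! p, replicate N bt ! p, R bt (a ! (N - 1)) ! p]) [0..<N])"
    then have p: "p < N" by simp
    show "map (\<lambda>p. mm [b ! p, replicate N bt ! p, R bt (a ! (N - 1)) ! p]) [0..<N] ! p = a ! p"
    proof (cases "p < N - 1")
      case True
      then show ?thesis using p b_low[OF True] R_nth[OF p] mm(3)[OF btA aA[OF p]] by simp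
    next
      case False
      then have "p = N - 1" using p by linarith
      then show ?thesis using p b_top R_nth[OF p] mm(2)[OF btA aA[OF p]] False by simp
    qed
  qed (simp add: a)
  ultimately show ?thesis by simp
qed

end


lemma concat_uniform:
  assumes "\<forall>i<m. length (f i) = B"
  shows "length (concat (map f [0..<m])) = m * B \<and>
         (\<forall>i r. i < m \<longrightarrow> r < B \<longrightarrow> concat (map f [0..<m]) ! (i * B + r) = f i ! r)"
  using assms
proof (induction m)
  case 0 then show ?case by simp
next
  case (Suc m)
  then have IH: "length (concat (map f [0..<m])) = m * B"
    "\<forall>i r. i < m \<longrightarrow> r < B \<longrightarrow> concat (map f [0..<m]) ! (i * B + r) = f i ! r" by auto
  have lm: "length (f m) = B" using Suc.prems by simp
  show ?case
  proof (intro conjI allI impI)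
    show "length (concat (map f [0..<Suc m])) = Suc m * B" using IH(1) lm by simp
    fix i r assume i: "i < Suc m" and r: "r < B"
    show "concat (map f [0..<Suc m]) ! (i * B + r) = f i ! r"
    proof (cases "i < m")
      case True
      have "i * B + r < m * B"
      proof -
        have "Suc i * B \<le> m * B" using True by (intro mult_le_mono1) simp
        then show ?thesis using r by simp
      qed
      then show ?thesis using IH True r by (simp add: nth_append)
    next
      case False
      then have "i = m" using i by simp
      then show ?thesis using IH(1) r by (simp add: nth_append)
    qed
  qed
qed

lemma idx_bound: "i < m \<Longrightarrow> r < B \<Longrightarrow> i * B + r < m * (B::nat)"
proof -
  assume "i < m" "r < B"
  have "Suc i * B \<le> m * B" using \<open>i < m\<close> by (intro mult_le_mono1) simp
  then show ?thesis using \<open>r < B\<close> by simp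
qed

context cube_setting begin

lemma face_in_Delta:
  assumes c: "c \<in> D" and j: "j < n"
  shows "face j c \<in> Delta A F (sub\<alpha> j)"
proof (cases "n = 1")
  case True
  then have j0: "j = 0" using j by simp
  have "sub\<alpha> j = []" using sub\<alpha>_len[OF j] True by simp
  moreover have "face j c = [c ! 0]"
  proof -
    have "M = 1" unfolding M_def using True by simp
    then show ?thesis using face_eq[OF j, of c] j0 by (simp add: ins_def)
  qed
  moreover have "c ! 0 \<in> A" using D_nth_A[OF c] N_ge2 by simp
  ultimately show ?thesis unfolding Delta_def by simp
next
  case False
  then have n2: "n \<ge> 2" using n1 by simp
  have "map (\<lambda>m. c ! ins j m) [0..<M] \<in> sub_gen F M (Gen' j)"
  proof (rule sub_gen_reindex[OF _ Gen_len _ c[unfolded D_def]])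
    show "\<forall>p<M. ins j p < N" using ins_bound[OF j] unfolding N_def M_def by blast
    show "\<forall>g\<in>Gen. map (\<lambda>p. g ! ins j p) [0..<M] \<in> sub_gen F M (Gen' j)"
    proof
      fix g assume "g \<in> Gen"
      then obtain i x y where g: "g = cube_vec n i x y" "i < n" "(x, y) \<in> \<alpha>s ! i" unfolding Gen_def by blast
      have xA: "x \<in> A" using alpha_A[OF g(2,3)] by simp
      have gn: "g ! ins j m = (if bit (ins j m) i then y else x)" if "m < M" for m
        unfolding g(1) by (rule cube_vec_nth) (use ins_bound[OF j] that in \<open>simp add: M_def\<close>)
      show "map (\<lambda>p. g ! ins j p) [0..<M] \<in> sub_gen F M (Gen' j)"
      proof (cases "i = j")
        case True
        have "map (\<lambda>p. g ! ins j p) [0..<M] = cube_vec (n - 1) 0 x x"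
          by (rule nth_equalityI) (auto simp: gn cube_vec_nth M_def bit_ins True)
        moreover have "(x, x) \<in> sub\<alpha> j ! 0"
        proof -
          have "sub\<alpha> j ! 0 = \<alpha>s ! (if 0 < j then 0 else 1)" using sub\<alpha>_nth[OF j] n2 by simp
          moreover have "(if 0 < j then 0 else 1) < n" using n2 by simp
          ultimately show ?thesis using alpha_refl xA by simp
        qed
        moreover have "(0::nat) < n - 1" using n2 by simp
        ultimately show ?thesis unfolding Gen'_def by (intro sub_gen.gen) blast
      next
        case False
        define i' where "i' = (if i < j then i else i - 1)"
        have i': "i' < n - 1" using g(2) j False unfolding i'_def by auto
        have bi: "bit (ins j m) i = bit m i'" for m
          unfolding bit_ins i'_def using False by auto
        have "map (\<lambda>p. g ! ins j p) [0..<M] = cube_vec (n - 1) i' x y"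
          by (rule nth_equalityI) (auto simp: gn cube_vec_nth M_def bi)
        moreover have "sub\<alpha> j ! i' = \<alpha>s ! i"
          using sub\<alpha>_nth[OF j i'] False unfolding i'_def by auto
        ultimately show ?thesis using g(3) i' unfolding Gen'_def by (intro sub_gen.gen) auto
      qed
    qed
  qed
  then show ?thesis unfolding face_eq[OF j] Delta_sub[OF j n2] .
qed

end


context cube_setting begin

lemma forward_comm:
  assumes c: "c \<in> D"
  shows "(q (take (N - 1) c), c ! (N - 1)) \<in> commutator A F \<alpha>s"
  unfolding commutator_def
proof (rule InterI)
  fix \<gamma> assume "\<gamma> \<in> {\<gamma>. congruence A F \<gamma> \<and> centralizes A F \<alpha>s \<gamma>}"
  then have gc: "congruence A F \<gamma>" and cent: "centralizes A F \<alpha>s \<gamma>" by auto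
  obtain gs t where gsG: "set gs \<subseteq> Gen" and tt: "t \<in> term_ops F (length gs)"
    and crep: "c = map (\<lambda>p. t (map (\<lambda>g. g ! p) gs)) [0..<N]"
    using sub_gen_rep[OF Gen_len c[unfolded D_def]] by blast
  define K where "K = length gs"
  have "\<forall>v<K. \<exists>i x y. gs ! v = cube_vec n i x y \<and> i < n \<and> (x, y) \<in> \<alpha>s ! i"
    using gsG unfolding K_def Gen_def by (auto simp: subset_iff)
  then obtain dir lo hi where dlh: "\<forall>v<K. gs ! v = cube_vec n (dir v) (lo v) (hi v) \<and> dir v < n \<and> (lo v, hi v) \<in> \<alpha>s ! dir v"
    by metis
  have dirn: "dir v < n" if "v < K" for v using dlh that by blast
  have loA: "lo v \<in> A" and hiA: "hi v \<in> A" if "v < K" for v using dlh that alpha_A by blast+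
  define TT where "TT s = t (map (\<lambda>v. if s (dir v) then hi v else lo v) [0..<K])" for s
  have TTA: "TT s \<in> A" for s
    unfolding TT_def by (rule term_ops_in_A[OF alg tt]) (auto simp: K_def loA hiA)
  have TTcong: "TT s = TT s'" if "\<forall>i<n. s i = s' i" for s s'
  proof -
    have "map (\<lambda>v. if s (dir v) then hi v else lo v) [0..<K] = map (\<lambda>v. if s' (dir v) then hi v else lo v) [0..<K]"
      using that dirn by (intro map_cong) auto
    then show ?thesis unfolding TT_def by (rule arg_cong)
  qed
  define UU where "UU s = q (map (\<lambda>j. TT (\<lambda>i. bit j i \<and> s i)) [0..<N - 1])" for s
  have UU_gen: "UU s = TT s" if i0: "i0 < n" and inv: "\<forall>k::nat. TT (\<lambda>i. bit (unset_bit i0 k) i \<and> s i) = TT (\<lambda>i. bit k i \<and> s i)" for s i0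
  proof -
    define y where "y j = TT (\<lambda>i. bit j i \<and> s i)" for j :: nat
    have yA: "\<forall>k. y k \<in> A" unfolding y_def using TTA by blast
    have yinv: "\<forall>k. y (unset_bit i0 k) = y k" unfolding y_def using inv by blast
    have "q (map y [0..<N - 1]) = y (N - 1)" by (rule q_cube[OF i0 yA yinv])
    then have "q (map (\<lambda>j. TT (\<lambda>i. bit j i \<and> s i)) [0..<N - 1]) = TT (\<lambda>i. bit (N - 1) i \<and> s i)"
      unfolding y_def .
    also have "\<dots> = TT s" by (rule TTcong) (simp add: bit_N1)
    finally show ?thesis unfolding UU_def .
  qed
  have UU_neg: "UU s = TT s" if "i0 < n" "\<not> s i0" for s i0
  proof (rule UU_gen[OF that(1)])
    show "\<forall>k::nat. TT (\<lambda>i. bit (unset_bit i0 k) i \<and> s i) = TT (\<lambda>i. bit k i \<and> s i)"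
      using that(2) by (auto intro!: TTcong simp: bit_unset_bit_iff)
  qed
  have cnth: "c ! p = TT (\<lambda>i. bit p i)" if p: "p < N" for p
  proof -
    have "map (\<lambda>g. g ! p) gs = map (\<lambda>v. if bit p (dir v) then hi v else lo v) [0..<K]"
      by (rule nth_equalityI) (use dlh p in \<open>auto simp: K_def cube_vec_nth N_def\<close>)
    then show ?thesis using p unfolding crep TT_def by simp
  qed
  have cL: "length c = N" unfolding crep by simp
  have qtake: "q (take (N - 1) c) = UU (\<lambda>_. True)"
  proof -
    have e: "map (\<lambda>j. c ! j) [0..<N - 1] = map (\<lambda>j. TT (\<lambda>i. bit j i \<and> True)) [0..<N - 1]"
      by (intro map_cong) (auto simp: cnth)
    show ?thesis unfolding take_as_map[OF cL] UU_def e ..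
  qed
  have ctop: "c ! (N - 1) = TT (\<lambda>_. True)"
    using cnth[of "N - 1"] N_ge2 TTcong[of "\<lambda>i. bit (N - 1) i" "\<lambda>_. True"] by (simp add: bit_N1)
  show "(q (take (N - 1) c), c ! (N - 1)) \<in> \<gamma>"
  proof (cases "\<exists>i0<n. \<forall>v<K. dir v = i0 \<longrightarrow> lo v = hi v")
    case True
    then obtain i0 where i0: "i0 < n" "\<forall>v<K. dir v = i0 \<longrightarrow> lo v = hi v" by blast
    have ign: "TT s = TT s'" if "\<forall>i. i \<noteq> i0 \<longrightarrow> s i = s' i" for s s'
    proof -
      have "map (\<lambda>v. if s (dir v) then hi v else lo v) [0..<K] = map (\<lambda>v. if s' (dir v) then hi v else lo v) [0..<K]"
        using that i0(2) by (intro map_cong) auto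
      then show ?thesis unfolding TT_def by (rule arg_cong)
    qed
    have "UU (\<lambda>_. True) = TT (\<lambda>_. True)"
      by (rule UU_gen[OF i0(1)]) (auto intro!: ign simp: bit_unset_bit_iff)
    then show ?thesis unfolding qtake ctop using congruence_refl[OF gc TTA] by simp
  next
    case False
    then have diff: "\<forall>i<n. \<exists>v<K. dir v = i \<and> lo v \<noteq> hi v" by blast
    define e where "e = UU (\<lambda>_. True)"
    have eA: "e \<in> A" unfolding e_def UU_def
      by (rule term_ops_in_A[OF alg q_term]) (auto simp: TTA)
    define B where "B = 2 * K + 1"
    define As where "As i = map lo [0..<K] @ map lo [0..<K] @ [e]" for i :: nat
    define Bs where "Bs i = map (\<lambda>v. if dir v = i then hi v else lo v) [0..<K] @ map lo [0..<K] @ [e]" for i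
    have AsL: "length (As i) = B" and BsL: "length (Bs i) = B" for i unfolding As_def Bs_def B_def by simp_all
    define X where "X s = concat (map (\<lambda>i. if s i then Bs i else As i) [0..<n])" for s
    have Xnth: "X s ! (i * B + r) = (if s i then Bs i else As i) ! r" if "i < n" "r < B" for s i r
      using concat_uniform[of n "\<lambda>i. if s i then Bs i else As i" B] that AsL BsL unfolding X_def by simp
    have XL: "length (X s) = n * B" for s
      using concat_uniform[of n "\<lambda>i. if s i then Bs i else As i" B] AsL BsL unfolding X_def by simp
    define t' where "t' xs = t (map (\<lambda>v. xs ! (dir v * B + v)) [0..<K])" for xs :: "'a list"
    define u' where "u' xs = q (map (\<lambda>j. t (map (\<lambda>v. xs ! (dir v * B + (if bit j (dir v) then v else K + v))) [0..<K])) [0..<N - 1])" for xs :: "'a list"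
    define Wt where "Wt xs = mm [t' xs, u' xs, xs ! (2 * K)]" for xs :: "'a list"
    have idxv: "dir v * B + v < n * B" if "v < K" for v
      using idx_bound[OF dirn[OF that], of v B] that unfolding B_def by simp
    have idxv2: "dir v * B + (K + v) < n * B" if "v < K" for v
      using idx_bound[OF dirn[OF that], of "K + v" B] that unfolding B_def by simp
    have sumB: "(\<Sum>i<n. length (As i)) = n * B" using AsL by simp
    have t'T: "t' \<in> term_ops F (n * B)"
      unfolding t'_def
      by (rule term_ops_proj_list[OF tt[folded K_def]]) (use idxv idxv2 in auto)
    have u'T: "u' \<in> term_ops F (n * B)"
    proof -
      have "(\<lambda>xs. q (map (\<lambda>g. g xs) (map (\<lambda>j xs. t (map (\<lambda>v. xs ! (dir v * B + (if bit j (dir v) then v else K + v))) [0..<K])) [0..<N - 1]))) \<in> term_ops F (n * B)"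
      proof (rule term_ops_subst[OF q_term])
        show "\<forall>g\<in>set (map (\<lambda>j xs. t (map (\<lambda>v. xs ! (dir v * B + (if bit j (dir v) then v else K + v))) [0..<K])) [0..<N - 1]).
            g \<in> term_ops F (n * B)"
        proof
          fix g assume "g \<in> set (map (\<lambda>j xs. t (map (\<lambda>v. xs ! (dir v * B + (if bit j (dir v) then v else K + v))) [0..<K])) [0..<N - 1])"
          then obtain j :: nat where g: "g = (\<lambda>xs. t (map (\<lambda>v. xs ! (dir v * B + (if bit j (dir v) then v else K + v))) [0..<K]))" by auto
          show "g \<in> term_ops F (n * B)" unfolding g
            by (rule term_ops_proj_list[OF tt[folded K_def]]) (use idxv idxv2 in auto)
        qed
      qed simp
      then show ?thesis unfolding u'_def by (simp add: o_def)
    qed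
    have WtT: "Wt \<in> term_ops F (\<Sum>i<n. length (As i))"
    proof -
      have "(\<lambda>xs. mm (map (\<lambda>g. g xs) [t', u', \<lambda>xs. xs ! (2 * K)])) \<in> term_ops F (n * B)"
      proof (rule term_ops_subst[OF mm(1)])
        have "0 * B + 2 * K < n * B" by (rule idx_bound) (use n1 B_def in auto)
        then have "2 * K < n * B" by simp
        then show "\<forall>g\<in>set [t', u', \<lambda>xs. xs ! (2 * K)]. g \<in> term_ops F (n * B)"
          using t'T u'T by (auto intro: term_ops.proj)
      qed simp
      then show ?thesis unfolding sumB Wt_def by simp
    qed
    have n0: "0 < n" using n1 by simp
    have Xv: "X s ! (dir v * B + v) = (if s (dir v) then hi v else lo v)" if "v < K" for s v
      using Xnth[OF dirn[OF that], of v s] that unfolding As_def Bs_def B_def by (simp add: nth_append)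
    have Xv2: "X s ! (dir v * B + (K + v)) = lo v" if "v < K" for s v
      using Xnth[OF dirn[OF that], of "K + v" s] that unfolding As_def Bs_def B_def by (simp add: nth_append)
    have Xe: "X s ! (2 * K) = e" for s
      using Xnth[OF n0, of "2 * K" s] unfolding As_def Bs_def B_def by (simp add: nth_append)
    have t'X: "t' (X s) = TT s" for s
    proof -
      have "map (\<lambda>v. X s ! (dir v * B + v)) [0..<K] = map (\<lambda>v. if s (dir v) then hi v else lo v) [0..<K]"
        by (intro map_cong) (auto simp: Xv)
      then show ?thesis unfolding t'_def TT_def by (rule arg_cong)
    qed
    have u'X: "u' (X s) = UU s" for s
    proof -
      have e: "map (\<lambda>v. X s ! (dir v * B + (if bit j (dir v) then v else K + v))) [0..<K]
          = map (\<lambda>v. if bit j (dir v) \<and> s (dir v) then hi v else lo v) [0..<K]" for j :: nat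
        by (intro map_cong) (auto simp: Xv Xv2)
      show ?thesis unfolding u'_def UU_def TT_def e ..
    qed
    have WX: "Wt (X s) = mm [TT s, UU s, e]" for s unfolding Wt_def t'X u'X Xe ..
    have WXe: "Wt (X s) = e" if "i0 < n" "\<not> s i0" for s i0
      unfolding WX UU_neg[of i0 s, OF that] using mm(2)[OF TTA eA] .
    have nS: "Suc (n - 1) = n" using n1 by simp
    have snoc: "concat (map (\<lambda>i. if s i then Bs i else As i) [0..<n - 1]) @ (if b then Bs (n - 1) else As (n - 1))
        = X (s(n - 1 := b))" for s b
      unfolding X_def by (subst nS[symmetric], rule concat_snoc_upt) auto
    have snoc_bs: "concat (map Bs [0..<n - 1]) @ (if b then Bs (n - 1) else As (n - 1))
        = X (\<lambda>i. i \<noteq> n - 1 \<or> b)" for b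
      unfolding X_def by (subst nS[symmetric], rule concat_snoc_upt) auto
    have C: "\<forall>as bs :: nat \<Rightarrow> 'a list. \<forall>t.
       (\<forall>i<n. length (as i) = length (bs i) \<and> set (as i) \<subseteq> A \<and> set (bs i) \<subseteq> A \<and>
              as i \<noteq> bs i \<and> list_all2 (\<lambda>x y. (x, y) \<in> \<alpha>s ! i) (as i) (bs i)) \<longrightarrow>
       t \<in> term_ops F (\<Sum>i<n. length (as i)) \<longrightarrow>
       (\<forall>s :: nat \<Rightarrow> bool. \<not> (\<forall>i<n - 1. s i) \<longrightarrow>
          (t (concat (map (\<lambda>i. if s i then bs i else as i) [0..<n - 1]) @ as (n - 1)),
           t (concat (map (\<lambda>i. if s i then bs i else as i) [0..<n - 1]) @ bs (n - 1))) \<in> \<gamma>) \<longrightarrow>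
       (t (concat (map bs [0..<n - 1]) @ as (n - 1)),
        t (concat (map bs [0..<n - 1]) @ bs (n - 1))) \<in> \<gamma>"
      using cent unfolding centralizes_def Let_def len .
    have pre: "\<forall>i<n. length (As i) = length (Bs i) \<and> set (As i) \<subseteq> A \<and> set (Bs i) \<subseteq> A \<and>
              As i \<noteq> Bs i \<and> list_all2 (\<lambda>x y. (x, y) \<in> \<alpha>s ! i) (As i) (Bs i)"
    proof (intro allI impI conjI)
      fix i assume i: "i < n"
      show "length (As i) = length (Bs i)" using AsL BsL by simp
      show "set (As i) \<subseteq> A" unfolding As_def using loA eA by auto
      show "set (Bs i) \<subseteq> A" unfolding Bs_def using loA hiA eA by auto
      obtain v where v: "v < K" "dir v = i" "lo v \<noteq> hi v" using diff i by blast
      have "As i ! v \<noteq> Bs i ! v" using v unfolding As_def Bs_def by (simp add: nth_append)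
      then show "As i \<noteq> Bs i" by metis
      show "list_all2 (\<lambda>x y. (x, y) \<in> \<alpha>s ! i) (As i) (Bs i)"
        unfolding As_def Bs_def
      proof (intro list_all2_appendI)
        show "list_all2 (\<lambda>x y. (x, y) \<in> \<alpha>s ! i) (map lo [0..<K]) (map (\<lambda>v. if dir v = i then hi v else lo v) [0..<K])"
          unfolding list_all2_conv_all_nth using dlh alpha_refl[OF i] loA by auto
        show "list_all2 (\<lambda>x y. (x, y) \<in> \<alpha>s ! i) (map lo [0..<K]) (map lo [0..<K])"
          unfolding list_all2_conv_all_nth using alpha_refl[OF i] loA by auto
        show "list_all2 (\<lambda>x y. (x, y) \<in> \<alpha>s ! i) [e] [e]" using alpha_refl[OF i eA] by simp
      qed
    qed
    have hyp: "\<forall>s :: nat \<Rightarrow> bool. \<not> (\<forall>i<n - 1. s i) \<longrightarrow>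
          (Wt (concat (map (\<lambda>i. if s i then Bs i else As i) [0..<n - 1]) @ As (n - 1)),
           Wt (concat (map (\<lambda>i. if s i then Bs i else As i) [0..<n - 1]) @ Bs (n - 1))) \<in> \<gamma>"
    proof (intro allI impI)
      fix s :: "nat \<Rightarrow> bool" assume "\<not> (\<forall>i<n - 1. s i)"
      then obtain i0 where i0: "i0 < n - 1" "\<not> s i0" by blast
      have i0n: "i0 < n" "i0 \<noteq> n - 1" using i0 by auto
      have "Wt (concat (map (\<lambda>i. if s i then Bs i else As i) [0..<n - 1]) @ As (n - 1)) = e"
        using snoc[of s False] WXe[OF i0n(1), of "s(n - 1 := False)"] i0 i0n by simp
      moreover have "Wt (concat (map (\<lambda>i. if s i then Bs i else As i) [0..<n - 1]) @ Bs (n - 1)) = e"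
        using snoc[of s True] WXe[OF i0n(1), of "s(n - 1 := True)"] i0 i0n by simp
      ultimately show "(Wt (concat (map (\<lambda>i. if s i then Bs i else As i) [0..<n - 1]) @ As (n - 1)),
           Wt (concat (map (\<lambda>i. if s i then Bs i else As i) [0..<n - 1]) @ Bs (n - 1))) \<in> \<gamma>"
        using congruence_refl[OF gc eA] by simp
    qed
    have concl: "(Wt (concat (map Bs [0..<n - 1]) @ As (n - 1)), Wt (concat (map Bs [0..<n - 1]) @ Bs (n - 1))) \<in> \<gamma>"
      using C pre WtT hyp by blast
    have nm1: "n - 1 < n" using n1 by simp
    have "Wt (concat (map Bs [0..<n - 1]) @ As (n - 1)) = e"
      using snoc_bs[of False] WXe[OF nm1, of "\<lambda>i. i \<noteq> n - 1 \<or> False"] by simp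
    moreover have "Wt (concat (map Bs [0..<n - 1]) @ Bs (n - 1)) = TT (\<lambda>_. True)"
    proof -
      have "Wt (concat (map Bs [0..<n - 1]) @ Bs (n - 1)) = Wt (X (\<lambda>i. i \<noteq> n - 1 \<or> True))"
        using snoc_bs[of True] by simp
      also have "\<dots> = mm [TT (\<lambda>_. True), e, e]" unfolding WX e_def by simp
      also have "\<dots> = TT (\<lambda>_. True)" using mm(3)[OF eA TTA] .
      finally show ?thesis .
    qed
    ultimately show ?thesis using concl unfolding qtake ctop e_def by simp
  qed
qed

end


context cube_setting begin

lemma main_iff:
  assumes "length a = N" "set a \<subseteq> A"
  shows "a \<in> D \<longleftrightarrow> ((\<forall>j<n. face j a \<in> Delta A F (sub\<alpha> j)) \<and>
     (q (take (N - 1) a), a ! (N - 1)) \<in> commutator A F \<alpha>s)"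
  using backward[OF assms] face_in_Delta forward_comm by blast

end

theorem mainTheorem9:
  fixes A :: "'a set" and F :: "'a operation set" and n :: nat
    and q :: "'a list \<Rightarrow> 'a" and \<alpha>s :: "('a \<times> 'a) set list" and a :: "'a list"
  assumes "algebra A F"
    and "has_malcev A F"
    and "n \<ge> 1"
    and "strong_cube_term A F n q"
    and "length \<alpha>s = n"
    and "\<forall>i<n. congruence A F (\<alpha>s ! i)"
    and "length a = 2 ^ n" and "set a \<subseteq> A"
  shows "a \<in> Delta A F \<alpha>s \<longleftrightarrow>
    ((\<forall>j<n. map (\<lambda>k. a ! k) (filter (\<lambda>k. \<not> bit k j) [0..<2 ^ n])
              \<in> Delta A F (take j \<alpha>s @ drop (Suc j) \<alpha>s)) \<and>
     (q (take (2 ^ n - 1) a), a ! (2 ^ n - 1)) \<in> commutator A F \<alpha>s)"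
proof -
  interpret cube_setting A F n q \<alpha>s
    by (unfold_locales) (use assms in auto)
  have "a \<in> D \<longleftrightarrow> ((\<forall>j<n. face j a \<in> Delta A F (sub\<alpha> j)) \<and>
     (q (take (N - 1) a), a ! (N - 1)) \<in> commutator A F \<alpha>s)"
    by (rule main_iff) (use assms(7,8) in \<open>auto simp: N_def\<close>)
  then show ?thesis unfolding Delta_eq face_def sub\<alpha>_def N_def .
qed


end
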